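(* Assume $h_0>0$, $|h|\le h_0$ and $U>h_0$. Fix a bond $e=\{x,y\}\in\mathscr B_\Lambda$, labelled so that $\eta_x=+1$, $\eta_y=-1$, and define on $P\mathcal H^{\rm hf}_\Lambda$ \[ X_{xy}(h):=P\,\tfrac12\Bigl(\mathrm{ad}_{\mathcal I_h((T_e)^{\rm off})}\bigl((T_e)^{\rm off}\bigr)\Bigr)^{\rm diag}P . \] Then $X_{xy}(h)$ is supported on $\{x,y\}$ and \[ \mathcal U_\Lambda X_{xy}(h)\mathcal U_\Lambda^*=-J_{xy}(h)B_{xy}+b_{xy}(h)\bigl(S^{(3)}_x-S^{(3)}_y\bigr),\qquad J_{xy}(h)=\frac{4t^2U}{U^2-h^2},\quad b_{xy}(h)=\frac{2ht^2}{U^2-h^2}. \] In particular $J_{xy}(0)=4t^2/U$ and $b_{xy}(0)=0$.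
   Context: $\Lambda=(\mathbb Z/L\mathbb Z)^d$, $L\in2\mathbb N$, $\mathscr B_\Lambda$ its unordered nearest-neighbour bonds, $\eta_x=(-1)^{x_1+\dots+x_d}$, $t\in\mathbb R$. Fermionic Fock space over $\ell^2(\Lambda)\otimes\mathbb C^2$ with CAR operators $c_{x\sigma}$, $n_{x\sigma}=c^*_{x\sigma}c_{x\sigma}$, $n_x=n_{x\uparrow}+n_{x\downarrow}$; $\mathcal H^{\rm hf}_\Lambda=\ker(\sum_xn_x-|\Lambda|)$; $D_\Lambda=\sum_xn_{x\uparrow}n_{x\downarrow}$; $M_\Lambda=\sum_x\eta_x\frac12(n_{x\uparrow}-n_{x\downarrow})$; $P$ the projection onto $\ker D_\Lambda$ in $\mathcal H^{\rm hf}_\Lambda$. $D_\Lambda$-grading: $P_m$ spectral projection of $D_\Lambda$ at $m$, $B^{(k)}=\sum_mP_{m+k}BP_m$, $B^{\rm diag}=B^{(0)}$, $B^{\rm off}=\sum_{k\ne0}B^{(k)}$. $T_e=-t\sum_\sigma(c^*_{x\sigma}c_{y\sigma}+c^*_{y\sigma}c_{x\sigma})$. For $k\ne0$, $\mathcal I_h((T_e)^{(k)})=\frac1{kU}\sum_{n\ge0}(\frac h{kU})^n\mathrm{ad}^{\,n}_{M_\Lambda}((T_e)^{(k)})$ ($\mathrm{ad}_S(A)=[S,A]$; for these bond operators the series converges whenever $|h|<U$), and $\mathcal I_h(T_e^{\rm off})=\sum_{k\ne0}\mathcal I_h((T_e)^{(k)})$. Spin identification: fix an ordering $\Lambda=\{x_1,\dots,x_N\}$;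 for $\boldsymbol\sigma\in\{\uparrow,\downarrow\}^\Lambda$ let $|\boldsymbol\sigma\rangle_f=c^*_{x_1\sigma_{x_1}}\cdots c^*_{x_N\sigma_{x_N}}|0\rangle$; $\mathcal U_\Lambda:P\mathcal H^{\rm hf}_\Lambda\to\bigotimes_{x\in\Lambda}\mathbb C^2$ is the unitary with $\mathcal U_\Lambda|\boldsymbol\sigma\rangle_f=\bigotimes_j|\sigma_{x_j}\rangle_{x_j}$. On the spin space, $S^{(a)}_x$ acts as $\frac12\sigma^{(a)}$ (Pauli) at $x$ and $B_{xy}=\frac14-\mathbf S_x\cdot\mathbf S_y$ (the singlet projector on the bond). *)

theory Defs
  imports Complex_Main "HOL-Library.List_Lexorder" "HOL-Library.Product_Lexorder"
begin

(* Sites of Lambda = (Z/LZ)^d are coordinate lists of length d with entries < L.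
   A mode is (site, spin) with True = up, False = down.
   A Fock basis state (occupation-number basis) is the finite set of occupied modes.
   Operators are matrices in this basis: 'a mat = 'a => 'a => complex. *)

type_synonym site = "nat list"
type_synonym mode = "site \<times> bool"
type_synonym fconf = "mode set"
type_synonym 'a mat = "'a \<Rightarrow> 'a \<Rightarrow> complex"

definition Lam :: "nat \<Rightarrow> nat \<Rightarrow> site set" where
  "Lam d L = {x. length x = d \<and> (\<forall>i\<in>set x. i < L)}"

definition eta :: "site \<Rightarrow> int" where
  "eta x = (-1) ^ sum_list x"

definition nn_bond :: "nat \<Rightarrow> nat \<Rightarrow> site \<Rightarrow> site \<Rightarrow> bool" where
  "nn_bond d L x y \<longleftrightarrow> x \<in> Lam d L \<and> y \<in> Lam d L \<and> x \<noteq> y \<and>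
     (\<exists>i<d. (y ! i = (x ! i + 1) mod L \<or> x ! i = (y ! i + 1) mod L) \<and>
            (\<forall>j<d. j \<noteq> i \<longrightarrow> x ! j = y ! j))"

(* basis of the fermionic Fock space over l^2(Lambda) (x) C^2 *)
definition FC :: "nat \<Rightarrow> nat \<Rightarrow> fconf set" where
  "FC d L = Pow (Lam d L \<times> UNIV)"

definition mmul :: "'a set \<Rightarrow> 'a mat \<Rightarrow> 'a mat \<Rightarrow> 'a mat" where
  "mmul C A B = (\<lambda>i j. \<Sum>k\<in>C. A i k * B k j)"

definition mid :: "'a mat" where
  "mid = (\<lambda>i j. if i = j then 1 else 0)"

definition comm :: "'a set \<Rightarrow> 'a mat \<Rightarrow> 'a mat \<Rightarrow> 'a mat" where
  "comm C A B = (\<lambda>i j. mmul C A B i j - mmul C B A i j)"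

(* CAR operators (Jordan-Wigner representation w.r.t. the lexicographic order of modes) *)
definition ann :: "mode \<Rightarrow> fconf mat" where
  "ann m = (\<lambda>S' S. if m \<in> S \<and> S' = S - {m}
                     then (-1) ^ card {m' \<in> S. m' < m} else 0)"

definition cre :: "mode \<Rightarrow> fconf mat" where
  "cre m = (\<lambda>S' S. cnj (ann m S S'))"

definition numop :: "nat \<Rightarrow> nat \<Rightarrow> mode \<Rightarrow> fconf mat" where
  "numop d L m = mmul (FC d L) (cre m) (ann m)"

definition Dop :: "nat \<Rightarrow> nat \<Rightarrow> fconf mat" where
  "Dop d L = (\<lambda>S' S. \<Sum>x\<in>Lam d L.
      mmul (FC d L) (numop d L (x, True)) (numop d L (x, False)) S' S)"

definition Mop :: "nat \<Rightarrow> nat \<Rightarrow> fconf mat" where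
  "Mop d L = (\<lambda>S' S. \<Sum>x\<in>Lam d L.
      of_int (eta x) * (1/2) * (numop d L (x, True) S' S - numop d L (x, False) S' S))"

definition Top :: "nat \<Rightarrow> nat \<Rightarrow> real \<Rightarrow> site \<Rightarrow> site \<Rightarrow> fconf mat" where
  "Top d L t x y = (\<lambda>S' S. - of_real t * (\<Sum>\<sigma>\<in>(UNIV::bool set).
      mmul (FC d L) (cre (x, \<sigma>)) (ann (y, \<sigma>)) S' S + mmul (FC d L) (cre (y, \<sigma>)) (ann (x, \<sigma>)) S' S))"

(* spectral projection of D_Lambda at m (D_Lambda is diagonal in the occupation basis) *)
definition Pm :: "nat \<Rightarrow> nat \<Rightarrow> int \<Rightarrow> fconf mat" where
  "Pm d L m = (\<lambda>S' S. if S' = S \<and> Dop d L S S = of_int m then 1 else 0)"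

(* B^(k) = sum_m P_{m+k} B P_m ; the spectrum of D_Lambda lies in {0..|Lambda|} *)
definition grade :: "nat \<Rightarrow> nat \<Rightarrow> int \<Rightarrow> fconf mat \<Rightarrow> fconf mat" where
  "grade d L k B = (\<lambda>S' S. \<Sum>m\<in>{0..int (card (Lam d L))}.
      mmul (FC d L) (mmul (FC d L) (Pm d L (m + k)) B) (Pm d L m) S' S)"

definition kset :: "nat \<Rightarrow> nat \<Rightarrow> int set" where
  "kset d L = {- int (card (Lam d L)) .. int (card (Lam d L))} - {0}"

definition offd :: "nat \<Rightarrow> nat \<Rightarrow> fconf mat \<Rightarrow> fconf mat" where
  "offd d L B = (\<lambda>S' S. \<Sum>k\<in>kset d L. grade d L k B S' S)"

(* I_h(B^(k)) = 1/(kU) sum_n (h/(kU))^n ad_M^n (B^(k)) ; series taken entrywise *)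
definition Ik :: "nat \<Rightarrow> nat \<Rightarrow> real \<Rightarrow> real \<Rightarrow> int \<Rightarrow> fconf mat \<Rightarrow> fconf mat" where
  "Ik d L U h k B = (\<lambda>S' S. 1 / (of_int k * of_real U) *
      (\<Sum>n. (of_real h / (of_int k * of_real U)) ^ n *
            (((comm (FC d L) (Mop d L)) ^^ n) (grade d L k B)) S' S))"

definition Ioff :: "nat \<Rightarrow> nat \<Rightarrow> real \<Rightarrow> real \<Rightarrow> fconf mat \<Rightarrow> fconf mat" where
  "Ioff d L U h B = (\<lambda>S' S. \<Sum>k\<in>kset d L. Ik d L U h k B S' S)"

(* P: projection onto ker D_Lambda inside the half-filled space *)
definition Pproj :: "nat \<Rightarrow> nat \<Rightarrow> fconf mat" where
  "Pproj d L = (\<lambda>S' S. if S' = S \<and> card S = card (Lam d L) \<and> Dop d L S S = 0 then 1 else 0)"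

definition Xop :: "nat \<Rightarrow> nat \<Rightarrow> real \<Rightarrow> real \<Rightarrow> real \<Rightarrow> site \<Rightarrow> site \<Rightarrow> fconf mat" where
  "Xop d L t U h x y =
     (let C = FC d L; T = offd d L (Top d L t x y); I = Ioff d L U h (Top d L t x y)
      in mmul C (mmul C (Pproj d L) (grade d L 0 (\<lambda>S' S. (1/2) * comm C I T S' S))) (Pproj d L))"

(* spin side: basis of (x)_{x in Lambda} C^2 = spin configurations on Lambda *)
definition SC :: "nat \<Rightarrow> nat \<Rightarrow> (site \<Rightarrow> bool) set" where
  "SC d L = {\<sigma>. \<forall>z. z \<notin> Lam d L \<longrightarrow> \<not> \<sigma> z}"

definition siteop :: "site \<Rightarrow> bool mat \<Rightarrow> (site \<Rightarrow> bool) mat" where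
  "siteop x A = (\<lambda>\<sigma>' \<sigma>. if (\<forall>z. z \<noteq> x \<longrightarrow> \<sigma>' z = \<sigma> z) then A (\<sigma>' x) (\<sigma> x) else 0)"

(* Pauli matrices, rows/columns indexed by True = up, False = down *)
definition pauli :: "nat \<Rightarrow> bool mat" where
  "pauli a = (\<lambda>i j.
     if a = 1 then (if i \<noteq> j then 1 else 0)
     else if a = 2 then (if i = j then 0 else if i then - \<i> else \<i>)
     else (if i \<noteq> j then 0 else if i then 1 else -1))"

definition Sop :: "site \<Rightarrow> nat \<Rightarrow> (site \<Rightarrow> bool) mat" where
  "Sop x a = siteop x (\<lambda>i j. (1/2) * pauli a i j)"

definition Bspin :: "nat \<Rightarrow> nat \<Rightarrow> site \<Rightarrow> site \<Rightarrow> (site \<Rightarrow> bool) mat" where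
  "Bspin d L x y = (\<lambda>\<sigma>' \<sigma>. (1/4) * mid \<sigma>' \<sigma> -
      (\<Sum>a\<in>{1,2,3::nat}. mmul (SC d L) (Sop x a) (Sop y a) \<sigma>' \<sigma>))"

(* |sigma>_f = c*_{x1 sigma_x1} ... c*_{xN sigma_xN} |0> for the ordering xs *)
primrec fvec :: "nat \<Rightarrow> nat \<Rightarrow> site list \<Rightarrow> (site \<Rightarrow> bool) \<Rightarrow> fconf \<Rightarrow> complex" where
  "fvec d L [] \<sigma> = (\<lambda>S. if S = {} then 1 else 0)"
| "fvec d L (z # zs) \<sigma> = (\<lambda>S'. \<Sum>S\<in>FC d L. cre (z, \<sigma> z) S' S * fvec d L zs \<sigma> S)"

(* matrix of U X U^* in the spin basis: <sigma'|_f X |sigma>_f *)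
definition Uconj :: "nat \<Rightarrow> nat \<Rightarrow> site list \<Rightarrow> fconf mat \<Rightarrow> (site \<Rightarrow> bool) mat" where
  "Uconj d L xs X = (\<lambda>\<sigma>' \<sigma>. \<Sum>S'\<in>FC d L. \<Sum>S\<in>FC d L.
      cnj (fvec d L xs \<sigma>' S') * X S' S * fvec d L xs \<sigma> S)"

definition spin_supported :: "nat \<Rightarrow> nat \<Rightarrow> site set \<Rightarrow> (site \<Rightarrow> bool) mat \<Rightarrow> bool" where
  "spin_supported d L Z A \<longleftrightarrow> (\<exists>K :: (site \<Rightarrow> bool) mat. \<forall>\<sigma>'\<in>SC d L. \<forall>\<sigma>\<in>SC d L.
      A \<sigma>' \<sigma> = (if \<forall>z\<in>Lam d L - Z. \<sigma>' z = \<sigma> z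
                 then K (\<lambda>z. z \<in> Z \<and> \<sigma>' z) (\<lambda>z. z \<in> Z \<and> \<sigma> z) else 0))"

definition Jxy :: "real \<Rightarrow> real \<Rightarrow> real \<Rightarrow> real" where
  "Jxy t U h = 4 * t^2 * U / (U^2 - h^2)"

definition bxy :: "real \<Rightarrow> real \<Rightarrow> real \<Rightarrow> real" where
  "bxy t U h = 2 * h * t^2 / (U^2 - h^2)"

end

theory Submission
  imports Defs
begin

lemma finite_Lam: "finite (Lam d L)"
  unfolding Lam_def
  by (rule finite_subset[OF _ finite_lists_length_eq[of "{..<L}" d]]) auto

definition Md :: "nat \<Rightarrow> nat \<Rightarrow> mode set" where "Md d L = Lam d L \<times> (UNIV::bool set)"

lemma finite_Md: "finite (Md d L)" unfolding Md_def using finite_Lam by auto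

lemma finite_FC: "finite (FC d L)" unfolding FC_def using finite_Md[unfolded Md_def] by auto

lemma FC_finite_el: "S \<in> FC d L \<Longrightarrow> finite S"
  unfolding FC_def using finite_Md[unfolded Md_def] by (auto intro: finite_subset)

definition app :: "'a set \<Rightarrow> 'a mat \<Rightarrow> ('a \<Rightarrow> complex) \<Rightarrow> 'a \<Rightarrow> complex" where
  "app C A v = (\<lambda>S'. \<Sum>S\<in>C. A S' S * v S)"

definition sg :: "fconf \<Rightarrow> mode \<Rightarrow> complex" where
  "sg S m = (-1) ^ card {m'\<in>S. m' < m}"

definition supp :: "'a set \<Rightarrow> ('a \<Rightarrow> complex) \<Rightarrow> bool" where
  "supp C v \<longleftrightarrow> (\<forall>S. v S \<noteq> 0 \<longrightarrow> S \<in> C)"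

lemma sg_sq: "sg S m * sg S m = 1"
proof -
  have "sg S m * sg S m = ((-1) * (-1)) ^ card {m'\<in>S. m' < m}"
    unfolding sg_def by (simp only: power_mult_distrib)
  then show ?thesis by simp
qed

lemma sg_insert: "finite S \<Longrightarrow> a \<notin> S \<Longrightarrow> sg (insert a S) m = (if a < m then - sg S m else sg S m)"
proof -
  assume f: "finite S" and a: "a \<notin> S"
  show ?thesis
  proof (cases "a < m")
    case True
    then have "{m'\<in>insert a S. m' < m} = insert a {m'\<in>S. m' < m}" by auto
    moreover have "card (insert a {m'\<in>S. m' < m}) = Suc (card {m'\<in>S. m' < m})"
      using f a by simp
    ultimately show ?thesis using True unfolding sg_def by simp
  next
    case False
    then have "{m'\<in>insert a S. m' < m} = {m'\<in>S. m' < m}" by auto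
    then show ?thesis using False unfolding sg_def by simp
  qed
qed

lemma sg_remove: "finite S \<Longrightarrow> a \<in> S \<Longrightarrow> sg (S - {a}) m = (if a < m then - sg S m else sg S m)"
proof -
  assume f: "finite S" and a: "a \<in> S"
  have "sg S m = sg (insert a (S - {a})) m" using a by (simp add: insert_absorb)
  also have "\<dots> = (if a < m then - sg (S - {a}) m else sg (S - {a}) m)"
    using f by (intro sg_insert) auto
  finally show ?thesis by auto
qed

lemma sg_insert_self: "sg (insert m S) m = sg S m"
  unfolding sg_def by (metis (lifting) insert_iff less_irrefl mem_Collect_eq)

lemma sg_remove_self: "sg (S - {m}) m = sg S m"
  unfolding sg_def by (metis (lifting) DiffD1 DiffI less_irrefl mem_Collect_eq singletonD)

lemma cre_eq: "cre m S' S = (if m \<in> S' \<and> S = S' - {m} then sg S' m else 0)"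
  unfolding cre_def ann_def sg_def by auto

lemma ann_eq: "ann m S' S = (if m \<notin> S' \<and> S = insert m S' then sg S' m else 0)"
proof (cases "m \<notin> S' \<and> S = insert m S'")
  case True
  then show ?thesis unfolding ann_def using sg_insert_self[of m S'] by (auto simp: sg_def)
next
  case False
  then have "\<not> (m \<in> S \<and> S' = S - {m})" by auto
  then show ?thesis using False unfolding ann_def by auto
qed

lemma cv_eq: "supp (FC d L) v \<Longrightarrow>
   app (FC d L) (cre m) v S' = (if m \<in> S' then sg S' m * v (S' - {m}) else 0)"
proof -
  assume s: "supp (FC d L) v"
  have "app (FC d L) (cre m) v S' = (\<Sum>S\<in>FC d L. (if S = S' - {m} then (if m \<in> S' then sg S' m * v S else 0) else 0))"
    unfolding app_def cre_eq by (intro sum.cong) auto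
  also have "\<dots> = (if S' - {m} \<in> FC d L then (if m \<in> S' then sg S' m * v (S' - {m}) else 0) else 0)"
    by (simp add: sum.delta' finite_FC)
  also have "\<dots> = (if m \<in> S' then sg S' m * v (S' - {m}) else 0)"
    using s unfolding supp_def by auto
  finally show ?thesis .
qed

lemma av_eq: "supp (FC d L) v \<Longrightarrow>
   app (FC d L) (ann m) v S' = (if m \<notin> S' then sg S' m * v (insert m S') else 0)"
proof -
  assume s: "supp (FC d L) v"
  have "app (FC d L) (ann m) v S' = (\<Sum>S\<in>FC d L. (if S = insert m S' then (if m \<notin> S' then sg S' m * v S else 0) else 0))"
    unfolding app_def ann_eq by (intro sum.cong) auto
  also have "\<dots> = (if insert m S' \<in> FC d L then (if m \<notin> S' then sg S' m * v (insert m S') else 0) else 0)"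
    by (simp add: sum.delta' finite_FC)
  also have "\<dots> = (if m \<notin> S' then sg S' m * v (insert m S') else 0)"
    using s unfolding supp_def by auto
  finally show ?thesis .
qed

lemma supp_cv: "supp (FC d L) v \<Longrightarrow> m \<in> Md d L \<Longrightarrow> supp (FC d L) (app (FC d L) (cre m) v)"
  unfolding supp_def
  apply (intro allI impI)
  apply (subst (asm) cv_eq[OF supp_def[THEN iffD2]], assumption)
  by (auto simp: FC_def Md_def split: if_splits)

lemma supp_av: "supp (FC d L) v \<Longrightarrow> supp (FC d L) (app (FC d L) (ann m) v)"
  unfolding supp_def
  apply (intro allI impI)
  apply (subst (asm) av_eq[OF supp_def[THEN iffD2]], assumption)
  by (auto simp: FC_def split: if_splits)

lemma supp_inf: "supp (FC d L) v \<Longrightarrow> infinite S \<Longrightarrow> v S = 0"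
  unfolding supp_def using FC_finite_el by blast

lemma AC1: assumes s: "supp (FC d L) v" and a: "a \<in> Md d L" and b: "b \<in> Md d L"
  shows "app (FC d L) (cre a) (app (FC d L) (cre b) v) S = - app (FC d L) (cre b) (app (FC d L) (cre a) v) S"
proof -
  have e: "S - {b} - {a} = S - {a} - {b}" by auto
  have L: "app (FC d L) (cre a) (app (FC d L) (cre b) v) S =
     (if a \<in> S then sg S a * (if b \<in> S - {a} then sg (S - {a}) b * v (S - {a} - {b}) else 0) else 0)"
    unfolding cv_eq[OF supp_cv[OF s b]] cv_eq[OF s] ..
  have R: "app (FC d L) (cre b) (app (FC d L) (cre a) v) S =
     (if b \<in> S then sg S b * (if a \<in> S - {b} then sg (S - {b}) a * v (S - {a} - {b}) else 0) else 0)"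
    unfolding cv_eq[OF supp_cv[OF s a]] cv_eq[OF s] e ..
  show ?thesis
  proof (cases "finite S \<and> a \<in> S \<and> b \<in> S \<and> a \<noteq> b")
    case False
    then show ?thesis unfolding L R using supp_inf[OF s, of "S - {a} - {b}"] by auto
  next
    case True
    then have "sg (S - {a}) b = (if a < b then - sg S b else sg S b)"
       "sg (S - {b}) a = (if b < a then - sg S a else sg S a)" by (auto simp: sg_remove)
    then show ?thesis unfolding L R using True by (auto simp: not_less_iff_gr_or_eq)
  qed
qed

lemma AC2: assumes s: "supp (FC d L) v" and a: "a \<in> Md d L" and b: "b \<in> Md d L" and m: "m \<in> Md d L"
  shows "app (FC d L) (cre a) (app (FC d L) (ann b) (app (FC d L) (cre m) v)) S =
     (if b = m then app (FC d L) (cre a) v S else 0) +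
     app (FC d L) (cre m) (app (FC d L) (cre a) (app (FC d L) (ann b) v)) S"
proof -
  have L: "app (FC d L) (cre a) (app (FC d L) (ann b) (app (FC d L) (cre m) v)) S =
    (if a \<in> S then sg S a * (if b \<notin> S - {a} then sg (S - {a}) b *
       (if m \<in> insert b (S - {a}) then sg (insert b (S - {a})) m * v (insert b (S - {a}) - {m}) else 0) else 0) else 0)"
    unfolding cv_eq[OF supp_av[OF supp_cv[OF s m]]] av_eq[OF supp_cv[OF s m]] cv_eq[OF s] ..
  have R1: "app (FC d L) (cre a) v S = (if a \<in> S then sg S a * v (S - {a}) else 0)"
    unfolding cv_eq[OF s] ..
  have R2: "app (FC d L) (cre m) (app (FC d L) (cre a) (app (FC d L) (ann b) v)) S =
    (if m \<in> S then sg S m * (if a \<in> S - {m} then sg (S - {m}) a *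
       (if b \<notin> S - {m} - {a} then sg (S - {m} - {a}) b * v (insert b (S - {m} - {a})) else 0) else 0) else 0)"
    unfolding cv_eq[OF supp_cv[OF supp_av[OF s] a]] cv_eq[OF supp_av[OF s]] av_eq[OF s] ..
  show ?thesis
  proof (cases "finite S")
    case False
    then show ?thesis unfolding L R1 R2 using supp_inf[OF s] by auto
  next
    case fin: True
    have sq: "\<And>T c. sg T c * sg T c = 1" by (rule sg_sq)
    show ?thesis
    proof (cases "b = m")
      case True
      then show ?thesis
      proof (cases "a \<in> S")
        case aS: True
        show ?thesis
        proof (cases "b \<in> S \<and> a \<noteq> b")
          case True
          have e1: "insert m (S - {m} - {a}) = S - {a}" using True `b = m` by auto
          have k: "sg S m * (sg (S - {m}) a * (sg (S - {m} - {a}) m * w)) = - (sg S a * w)" for w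
          proof (cases "a < m")
            case True
            then have "sg (S - {m}) a = sg S a" "sg (S - {m} - {a}) m = - sg S m"
              using `b \<in> S \<and> a \<noteq> b` `b = m` aS fin by (auto simp: sg_remove sg_remove_self)
            then show ?thesis using sq[of S m] by (simp add: algebra_simps)
          next
            case False
            then have "m < a" using `b \<in> S \<and> a \<noteq> b` `b = m` by auto
            then have "sg (S - {m}) a = - sg S a" "sg (S - {m} - {a}) m = sg S m"
              using `b \<in> S \<and> a \<noteq> b` `b = m` aS fin by (auto simp: sg_remove sg_remove_self)
            then show ?thesis using sq[of S m] by (simp add: algebra_simps)
          qed
          have "m \<noteq> a" using True `b = m` by auto
          then show ?thesis unfolding L R1 R2 using True aS `b = m`
            by (simp add: e1 k)
        next
          case False
          then have e2: "insert b (S - {a}) - {b} = S - {a}" using aS by auto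
          have "sg (insert b (S - {a})) b = sg (S - {a}) b" by (rule sg_insert_self)
          have k2: "sg (S - {a}) m * (sg (S - {a}) m * w) = w" for w
            using sq[of "S - {a}" m] by (simp add: mult.assoc[symmetric])
          have z: "\<not> (m \<in> S \<and> a \<in> S - {m})" using False `b = m` by auto
          show ?thesis unfolding L R1 R2 using False aS `b = m` z
            by (simp add: k2 e2 sg_insert_self)
        qed
      next
        case False
        then show ?thesis unfolding L R1 R2 using `b = m` by auto
      qed
    next
      case bm: False
      show ?thesis
      proof (cases "a \<in> S \<and> m \<in> S \<and> a \<noteq> m \<and> b \<notin> S - {a}")
        case False
        then show ?thesis unfolding L R1 R2 using bm by auto
      next
        case True
        have e3: "insert b (S - {a}) - {m} = insert b (S - {m} - {a})" using bm by auto
        show ?thesis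
        proof (cases "b = a")
          case True
          have "insert b (S - {a}) = S" using True `a \<in> S \<and> m \<in> S \<and> a \<noteq> m \<and> b \<notin> S - {a}` by auto
          have e4: "insert a (S - {m} - {a}) = S - {m}" using True `a \<in> S \<and> m \<in> S \<and> a \<noteq> m \<and> b \<notin> S - {a}` by auto
          have e5: "insert a (S - {a}) - {m} = S - {m}" using True `a \<in> S \<and> m \<in> S \<and> a \<noteq> m \<and> b \<notin> S - {a}` by auto
          have k4: "sg S a * (sg S a * (sg S m * w)) = sg S m * (sg (S - {m}) a * (sg (S - {m}) a * w))" for w
            using sq[of S a] sq[of "S - {m}" a] by (simp add: mult.assoc[symmetric])
          show ?thesis unfolding L R1 R2 using True bm `a \<in> S \<and> m \<in> S \<and> a \<noteq> m \<and> b \<notin> S - {a}`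
            by (simp add: e4 e5 sg_remove_self sg_insert_self k4 insert_absorb)

        next
          case False
          then have bS: "b \<notin> S" using True by auto
          have "sg (S - {a}) b = (if a < b then - sg S b else sg S b)"
               "sg (insert b (S - {a})) m = (if b < m then - (if a < m then - sg S m else sg S m) else (if a < m then - sg S m else sg S m))"
               "sg (S - {m}) a = (if m < a then - sg S a else sg S a)"
               "sg (S - {m} - {a}) b = (if a < b then - (if m < b then - sg S b else sg S b) else (if m < b then - sg S b else sg S b))"
            using True bS fin by (auto simp: sg_remove sg_insert)
          note eqs = this
          have o1: "b < a \<longleftrightarrow> \<not> a < b" "m < a \<longleftrightarrow> \<not> a < m" "m < b \<longleftrightarrow> \<not> b < m"
            using True bS bm False by auto
          have k5: "sg S a * (sg (S - {a}) b * (sg (insert b (S - {a})) m * w)) =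
                    sg S m * (sg (S - {m}) a * (sg (S - {m} - {a}) b * w))" for w
            unfolding eqs o1 using sq[of S a] sq[of S b] sq[of S m]
            by (cases "a < b"; cases "a < m"; cases "b < m"; simp add: algebra_simps)
          show ?thesis unfolding L R1 R2 using True bS bm False
            by (simp add: e3 k5) (use True in blast)
        qed
      qed
    qed
  qed
qed

lemma app_add: "app C A (\<lambda>S. f S + g S) = (\<lambda>S. app C A f S + app C A g S)"
  unfolding app_def by (simp add: distrib_left sum.distrib)

lemma app_scale: "app C A (\<lambda>S. c * f S) = (\<lambda>S. c * app C A f S)"
  unfolding app_def by (simp add: sum_distrib_left algebra_simps)

lemma app_zero: "app C A (\<lambda>S. 0) = (\<lambda>S. 0)"
  unfolding app_def by simp

lemma app_neg: "app C A (\<lambda>S. - f S) = (\<lambda>S. - app C A f S)"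
  unfolding app_def by (simp add: sum_negf)

lemma app_mmul: "app C (mmul C A B) v = app C A (app C B v)"
proof
  fix S'
  have "app C (mmul C A B) v S' = (\<Sum>S\<in>C. \<Sum>K\<in>C. A S' K * (B K S * v S))"
    unfolding app_def mmul_def by (simp add: sum_distrib_right mult.assoc)
  also have "\<dots> = (\<Sum>K\<in>C. \<Sum>S\<in>C. A S' K * (B K S * v S))" by (rule sum.swap)
  also have "\<dots> = app C A (app C B v) S'"
    unfolding app_def by (simp add: sum_distrib_left)
  finally show "app C (mmul C A B) v S' = app C A (app C B v) S'" .
qed

abbreviation Eop :: "nat \<Rightarrow> nat \<Rightarrow> mode \<Rightarrow> mode \<Rightarrow> fconf mat" where
  "Eop d L a b \<equiv> mmul (FC d L) (cre a) (ann b)"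

lemma supp_E: "supp (FC d L) v \<Longrightarrow> a \<in> Md d L \<Longrightarrow> supp (FC d L) (app (FC d L) (Eop d L a b) v)"
  by (simp add: app_mmul supp_cv supp_av)

lemma E_comm: assumes s: "supp (FC d L) v" and a: "a \<in> Md d L" and b: "b \<in> Md d L" and m: "m \<in> Md d L"
  shows "app (FC d L) (Eop d L a b) (app (FC d L) (cre m) v) =
    (\<lambda>S. (if b = m then app (FC d L) (cre a) v S else 0) + app (FC d L) (cre m) (app (FC d L) (Eop d L a b) v) S)"
  unfolding app_mmul using AC2[OF s a b m] by (intro ext) simp

lemma fvec_Cons: "fvec d L (z # zs) \<sigma> = app (FC d L) (cre (z, \<sigma> z)) (fvec d L zs \<sigma>)"
  unfolding app_def by simp

declare fvec.simps(2)[simp del]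

lemma supp_fvec: "set zs \<subseteq> Lam d L \<Longrightarrow> supp (FC d L) (fvec d L zs \<sigma>)"
proof (induction zs)
  case Nil
  then show ?case unfolding supp_def FC_def by auto
next
  case (Cons z zs)
  then show ?case unfolding fvec_Cons by (intro supp_cv) (auto simp: Md_def)
qed

lemma E_vac: "set zs \<subseteq> Lam d L \<Longrightarrow> a \<in> Md d L \<Longrightarrow> b \<in> Md d L \<Longrightarrow> (\<forall>z\<in>set zs. (z, \<sigma> z) \<noteq> b) \<Longrightarrow>
   app (FC d L) (Eop d L a b) (fvec d L zs \<sigma>) = (\<lambda>S. 0)"
proof (induction zs)
  case Nil
  have s: "supp (FC d L) (\<lambda>S. if S = {} then 1 else 0)" unfolding supp_def FC_def by auto
  show ?case unfolding app_mmul
    by (rule ext) (simp add: cv_eq[OF supp_av[OF s]] av_eq[OF s])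
next
  case (Cons z zs)
  then show ?case unfolding fvec_Cons
    by (subst E_comm) (auto simp: supp_fvec Md_def app_zero)
qed

lemma sg_pm: "sg S m = 1 \<or> sg S m = -1"
  unfolding sg_def by (cases "even (card {m'\<in>S. m' < m})") (simp_all add: neg_one_even_power neg_one_odd_power)

lemma fvec_val: "distinct zs \<Longrightarrow> set zs \<subseteq> Lam d L \<Longrightarrow>
   \<exists>c. (c = 1 \<or> c = -1) \<and> fvec d L zs \<sigma> = (\<lambda>S. if S = (\<lambda>z. (z, \<sigma> z)) ` set zs then c else 0)"
proof (induction zs)
  case Nil
  then show ?case by auto
next
  case (Cons z zs)
  then obtain c where c: "c = 1 \<or> c = -1" and f: "fvec d L zs \<sigma> = (\<lambda>S. if S = (\<lambda>z. (z, \<sigma> z)) ` set zs then c else 0)"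
    by auto
  let ?W = "(\<lambda>z. (z, \<sigma> z)) ` set zs"
  have nW: "(z, \<sigma> z) \<notin> ?W" using Cons.prems by auto
  have s: "supp (FC d L) (fvec d L zs \<sigma>)" using Cons.prems by (intro supp_fvec) auto
  have "fvec d L (z # zs) \<sigma> = (\<lambda>S. if S = insert (z, \<sigma> z) ?W then sg (insert (z, \<sigma> z) ?W) (z, \<sigma> z) * c else 0)"
  proof
    fix S
    show "fvec d L (z # zs) \<sigma> S = (if S = insert (z, \<sigma> z) ?W then sg (insert (z, \<sigma> z) ?W) (z, \<sigma> z) * c else 0)"
      unfolding fvec_Cons cv_eq[OF s] unfolding f using nW by auto
  qed
  moreover have "sg (insert (z, \<sigma> z) ?W) (z, \<sigma> z) * c = 1 \<or> sg (insert (z, \<sigma> z) ?W) (z, \<sigma> z) * c = -1"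
    using c sg_pm[of "insert (z, \<sigma> z) ?W" "(z, \<sigma> z)"] by auto
  ultimately show ?case by auto
qed

lemma fvec_cong: "(\<And>z. z \<in> set zs \<Longrightarrow> \<sigma> z = \<tau> z) \<Longrightarrow> fvec d L zs \<sigma> = fvec d L zs \<tau>"
  by (induction zs) (auto simp: fvec_Cons)

lemma fvec_pull: "distinct zs \<Longrightarrow> set zs \<subseteq> Lam d L \<Longrightarrow> z \<in> set zs \<Longrightarrow>
  fvec d L zs \<sigma> = (\<lambda>S. (-1) ^ length (takeWhile (\<lambda>w. w \<noteq> z) zs) *
      app (FC d L) (cre (z, \<sigma> z)) (fvec d L (removeAll z zs) \<sigma>) S)"
proof (induction zs)
  case Nil
  then show ?case by simp
next
  case (Cons w zs)
  show ?case
  proof (cases "w = z")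
    case True
    then have "removeAll z zs = zs" using Cons.prems by (simp add: distinct_removeAll)
    then show ?thesis using True by (simp add: fvec_Cons)
  next
    case False
    have IH: "fvec d L zs \<sigma> = (\<lambda>S. (-1) ^ length (takeWhile (\<lambda>w. w \<noteq> z) zs) *
      app (FC d L) (cre (z, \<sigma> z)) (fvec d L (removeAll z zs) \<sigma>) S)"
      using Cons False by auto
    have s: "supp (FC d L) (fvec d L (removeAll z zs) \<sigma>)" using Cons.prems by (intro supp_fvec) auto
    have mz: "(z, \<sigma> z) \<in> Md d L" "(w, \<sigma> w) \<in> Md d L" using Cons.prems by (auto simp: Md_def)
    show ?thesis
      unfolding fvec_Cons IH app_scale using False
      by (auto simp: fvec_Cons AC1[OF s mz(1) mz(2)])
  qed
qed

definition dv :: "nat \<Rightarrow> nat \<Rightarrow> fconf \<Rightarrow> nat" where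
  "dv d L S = card {z \<in> Lam d L. (z, True) \<in> S \<and> (z, False) \<in> S}"

definition mv :: "nat \<Rightarrow> nat \<Rightarrow> fconf \<Rightarrow> complex" where
  "mv d L S = (\<Sum>z\<in>Lam d L. of_int (eta z) * (1/2) *
      ((if (z, True) \<in> S then 1 else 0) - (if (z, False) \<in> S then 1 else 0)))"

definition wt :: "mode \<Rightarrow> complex" where
  "wt m = of_int (eta (fst m)) * (1/2) * (if snd m then 1 else -1)"

lemma FC_minus: "S \<in> FC d L \<Longrightarrow> S - {m} \<in> FC d L"
  unfolding FC_def by auto

lemma numop_eq: "S \<in> FC d L \<Longrightarrow> numop d L m S' S = (if S' = S \<and> m \<in> S then 1 else 0)"
proof -
  assume S: "S \<in> FC d L"
  have "numop d L m S' S = (\<Sum>K\<in>FC d L. if K = S - {m} then (if S' = S \<and> m \<in> S then 1 else 0) else 0)"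
    unfolding numop_def mmul_def
  proof (intro sum.cong refl)
    fix K assume "K \<in> FC d L"
    show "cre m S' K * ann m K S = (if K = S - {m} then (if S' = S \<and> m \<in> S then 1 else 0) else 0)"
      unfolding cre_eq ann_eq
      using sg_sq[of S m] sg_remove_self[of S m]
      by (auto simp: insert_absorb)
  qed
  also have "\<dots> = (if S' = S \<and> m \<in> S then 1 else 0)"
    using FC_minus[OF S] by (simp add: finite_FC)
  finally show ?thesis .
qed

lemma Dop_eq: "S \<in> FC d L \<Longrightarrow> Dop d L S' S = (if S' = S then of_nat (dv d L S) else 0)"
proof -
  assume S: "S \<in> FC d L"
  have "Dop d L S' S = (\<Sum>z\<in>Lam d L. of_bool (S' = S \<and> (z, True) \<in> S \<and> (z, False) \<in> S))"
    unfolding Dop_def mmul_def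
  proof (intro sum.cong refl)
    fix z
    have "(\<Sum>K\<in>FC d L. numop d L (z, True) S' K * numop d L (z, False) K S)
        = (\<Sum>K\<in>FC d L. if K = S then of_bool (S' = S \<and> (z, True) \<in> S \<and> (z, False) \<in> S) else 0)"
      by (intro sum.cong refl) (auto simp: numop_eq[OF S] numop_eq)
    also have "\<dots> = of_bool (S' = S \<and> (z, True) \<in> S \<and> (z, False) \<in> S)"
      using S by (simp add: finite_FC)
    finally show "(\<Sum>K\<in>FC d L. numop d L (z, True) S' K * numop d L (z, False) K S)
        = of_bool (S' = S \<and> (z, True) \<in> S \<and> (z, False) \<in> S)" .
  qed
  also have "\<dots> = (if S' = S then of_nat (dv d L S) else 0)"
    unfolding dv_def by (cases "S' = S") (simp_all add: finite_Lam Int_def)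
  finally show ?thesis .
qed

lemma Mop_eq: "S \<in> FC d L \<Longrightarrow> Mop d L S' S = (if S' = S then mv d L S else 0)"
  unfolding Mop_def mv_def by (auto simp: numop_eq)

lemma mv_wt: "S \<subseteq> Md d L \<Longrightarrow> mv d L S = (\<Sum>m\<in>S. wt m)"
proof -
  assume S: "S \<subseteq> Md d L"
  have "mv d L S = (\<Sum>z\<in>Lam d L. \<Sum>s\<in>(UNIV::bool set). if (z, s) \<in> S then wt (z, s) else 0)"
    unfolding mv_def wt_def by (intro sum.cong refl) (simp add: UNIV_bool algebra_simps)
  also have "\<dots> = (\<Sum>m\<in>Md d L. if m \<in> S then wt m else 0)"
    unfolding Md_def sum.cartesian_product' ..
  also have "\<dots> = (\<Sum>m\<in>Md d L \<inter> S. wt m)"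
    by (simp add: sum.inter_restrict finite_Md)
  also have "Md d L \<inter> S = S" using S by auto
  finally show ?thesis .
qed

lemma E_nz: "S \<in> FC d L \<Longrightarrow> Eop d L a b S' S \<noteq> 0 \<Longrightarrow> b \<in> S \<and> a \<notin> S - {b} \<and> S' = insert a (S - {b})"
proof -
  assume S: "S \<in> FC d L" and nz: "Eop d L a b S' S \<noteq> 0"
  then obtain K where "cre a S' K * ann b K S \<noteq> 0" unfolding mmul_def
    by (meson sum.neutral)
  then have "a \<in> S' \<and> K = S' - {a}" "b \<notin> K \<and> S = insert b K"
    unfolding cre_eq ann_eq by (auto split: if_splits)
  then show ?thesis by auto
qed

lemma E_entry: "S \<in> FC d L \<Longrightarrow> Eop d L a b S' S =
   (if b \<in> S \<and> a \<notin> S - {b} \<and> S' = insert a (S - {b}) then sg (insert a (S - {b})) a * sg (S - {b}) b else 0)"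
proof -
  assume S: "S \<in> FC d L"
  have "Eop d L a b S' S = (\<Sum>K\<in>FC d L. if K = S - {b} then
     (if b \<in> S \<and> a \<notin> S - {b} \<and> S' = insert a (S - {b}) then sg (insert a (S - {b})) a * sg (S - {b}) b else 0) else 0)"
    unfolding mmul_def
  proof (intro sum.cong refl)
    fix K
    show "cre a S' K * ann b K S = (if K = S - {b} then
     (if b \<in> S \<and> a \<notin> S - {b} \<and> S' = insert a (S - {b}) then sg (insert a (S - {b})) a * sg (S - {b}) b else 0) else 0)"
      unfolding cre_eq ann_eq by (auto simp: insert_absorb)
  qed
  also have "\<dots> = (if b \<in> S \<and> a \<notin> S - {b} \<and> S' = insert a (S - {b}) then sg (insert a (S - {b})) a * sg (S - {b}) b else 0)"
    using FC_minus[OF S] by (simp add: finite_FC)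
  finally show ?thesis .
qed

lemma mv_hop: "S \<in> FC d L \<Longrightarrow> a \<in> Md d L \<Longrightarrow> Eop d L a b S' S \<noteq> 0 \<Longrightarrow> mv d L S' - mv d L S = wt a - wt b"
proof -
  assume S: "S \<in> FC d L" and a: "a \<in> Md d L" and nz: "Eop d L a b S' S \<noteq> 0"
  note h = E_nz[OF S nz]
  have SM: "S \<subseteq> Md d L" and fS: "finite S" using S unfolding FC_def Md_def
    using finite_Md[unfolded Md_def] by (auto intro: finite_subset)
  have "insert a (S - {b}) \<subseteq> Md d L" using SM a by auto
  then have "mv d L S' = (\<Sum>m\<in>insert a (S - {b}). wt m)" using h by (simp add: mv_wt)
  also have "\<dots> = wt a + (\<Sum>m\<in>S - {b}. wt m)" using h fS by (simp)
  also have "\<dots> = wt a + (\<Sum>m\<in>S. wt m) - wt b" using h fS by (simp add: sum_diff1)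
  finally show ?thesis using mv_wt[OF SM] by simp
qed

lemma dv_le: "dv d L S \<le> card (Lam d L)"
  unfolding dv_def by (rule card_mono[OF finite_Lam]) auto

lemma Pm_eq: "Pm d L m S' S = (if S' = S \<and> int (dv d L S) = m then 1 else 0)" if "S \<in> FC d L"
proof -
  have "(of_nat (dv d L S) :: complex) = of_int m \<longleftrightarrow> int (dv d L S) = m"
    by (metis of_int_eq_iff of_int_of_nat_eq)
  then show ?thesis unfolding Pm_def using Dop_eq[OF that] by auto
qed

lemma grade_eq: assumes S: "S \<in> FC d L" and S': "S' \<in> FC d L"
  shows "grade d L k B S' S = (if int (dv d L S') = int (dv d L S) + k then B S' S else 0)"
proof -
  have e: "mmul (FC d L) (mmul (FC d L) (Pm d L (m + k)) B) (Pm d L m) S' S =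
     (if int (dv d L S) = m then (if int (dv d L S') = m + k then B S' S else 0) else 0)" for m
  proof -
    have "mmul (FC d L) (mmul (FC d L) (Pm d L (m + k)) B) (Pm d L m) S' S =
       (\<Sum>K\<in>FC d L. if K = S then mmul (FC d L) (Pm d L (m + k)) B S' S * (if int (dv d L S) = m then 1 else 0) else 0)"
      unfolding mmul_def[of _ _ "Pm d L m"]
      by (intro sum.cong refl) (auto simp: Pm_eq[OF S])
    also have "\<dots> = mmul (FC d L) (Pm d L (m + k)) B S' S * (if int (dv d L S) = m then 1 else 0)"
      using S by (simp add: finite_FC)
    also have "mmul (FC d L) (Pm d L (m + k)) B S' S =
        (\<Sum>K\<in>FC d L. if K = S' then (if int (dv d L S') = m + k then B S' S else 0) else 0)"
      unfolding mmul_def by (intro sum.cong refl) (auto simp: Pm_eq)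
    also have "\<dots> = (if int (dv d L S') = m + k then B S' S else 0)"
      using S' by (simp add: finite_FC)
    finally show ?thesis by auto
  qed
  have "grade d L k B S' S = (\<Sum>m\<in>{0..int (card (Lam d L))}.
      (if int (dv d L S) = m then (if int (dv d L S') = m + k then B S' S else 0) else 0))"
    unfolding grade_def e ..
  also have "\<dots> = (if int (dv d L S') = int (dv d L S) + k then B S' S else 0)"
    using dv_le[of d L S] by simp
  finally show ?thesis .
qed

lemma offd_eq: assumes S: "S \<in> FC d L" and S': "S' \<in> FC d L"
  shows "offd d L B S' S = (if dv d L S' \<noteq> dv d L S then B S' S else 0)"
proof -
  have "offd d L B S' S = (\<Sum>k\<in>kset d L. if int (dv d L S') - int (dv d L S) = k then B S' S else 0)"
    unfolding offd_def grade_eq[OF S S'] by (intro sum.cong refl) auto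
  also have "\<dots> = (if int (dv d L S') - int (dv d L S) \<in> kset d L then B S' S else 0)"
    by (simp add: kset_def)
  also have "\<dots> = (if dv d L S' \<noteq> dv d L S then B S' S else 0)"
    using dv_le[of d L S] dv_le[of d L S'] unfolding kset_def by auto
  finally show ?thesis .
qed

lemma comm_pow: "S \<in> FC d L \<Longrightarrow> S' \<in> FC d L \<Longrightarrow>
  ((comm (FC d L) (Mop d L)) ^^ n) A S' S = (mv d L S' - mv d L S) ^ n * A S' S"
proof (induction n arbitrary: S S')
  case 0
  then show ?case by simp
next
  case (Suc n)
  let ?B = "((comm (FC d L) (Mop d L)) ^^ n) A"
  have 1: "mmul (FC d L) (Mop d L) ?B S' S = mv d L S' * ?B S' S"
  proof -
    have "mmul (FC d L) (Mop d L) ?B S' S = (\<Sum>K\<in>FC d L. if K = S' then mv d L S' * ?B S' S else 0)"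
      unfolding mmul_def by (intro sum.cong refl) (auto simp: Mop_eq)
    then show ?thesis using Suc.prems by (simp add: finite_FC)
  qed
  have 2: "mmul (FC d L) ?B (Mop d L) S' S = ?B S' S * mv d L S"
  proof -
    have "mmul (FC d L) ?B (Mop d L) S' S = (\<Sum>K\<in>FC d L. if K = S then ?B S' S * mv d L S else 0)"
      unfolding mmul_def by (intro sum.cong refl) (auto simp: Mop_eq[OF Suc.prems(1)])
    then show ?thesis using Suc.prems by (simp add: finite_FC)
  qed
  have "((comm (FC d L) (Mop d L)) ^^ Suc n) A S' S = comm (FC d L) (Mop d L) ?B S' S" by simp
  also have "\<dots> = mmul (FC d L) (Mop d L) ?B S' S - mmul (FC d L) ?B (Mop d L) S' S"
    unfolding comm_def ..
  also have "\<dots> = (mv d L S' - mv d L S) * ?B S' S" unfolding 1 2 by (simp add: algebra_simps)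
  finally show ?case using Suc.IH[OF Suc.prems] by simp
qed

lemma Ik_eq: assumes S: "S \<in> FC d L" and S': "S' \<in> FC d L" and k: "k \<noteq> 0" and U: "U > 0"
  and H: "B S' S \<noteq> 0 \<longrightarrow> \<bar>h\<bar> * norm (mv d L S' - mv d L S) < U"
  shows "Ik d L U h k B S' S = (if int (dv d L S') = int (dv d L S) + k then
      B S' S / (of_int k * of_real U - of_real h * (mv d L S' - mv d L S)) else 0)"
proof -
  let ?G = "grade d L k B S' S"
  let ?D = "mv d L S' - mv d L S"
  let ?r = "of_real h / (of_int k * of_real U) * ?D"
  have kU: "(of_int k * of_real U :: complex) \<noteq> 0" using k U by simp
  have ser: "(\<Sum>n. (of_real h / (of_int k * of_real U)) ^ n *
            (((comm (FC d L) (Mop d L)) ^^ n) (grade d L k B)) S' S) = (\<Sum>n. ?r ^ n * ?G)"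
    unfolding comm_pow[OF S S'] by (simp only: power_mult_distrib mult.assoc)
  show ?thesis
  proof (cases "?G = 0")
    case True
    then show ?thesis unfolding Ik_def ser using grade_eq[OF S S', of k B] by (auto split: if_splits)
  next
    case False
    then have c: "int (dv d L S') = int (dv d L S) + k" and nz: "B S' S \<noteq> 0"
      using grade_eq[OF S S', of k B] by (auto split: if_splits)
    have "norm ?r = \<bar>h\<bar> * norm ?D / (\<bar>of_int k\<bar> * U)"
      using U by (simp add: norm_mult norm_divide)
    also have "\<dots> < 1"
    proof -
      have k1: "\<bar>(of_int k :: real)\<bar> \<ge> 1" using k by linarith
      have "U \<le> \<bar>of_int k\<bar> * U" using mult_right_mono[OF k1, of U] U by simp
      then have lt: "\<bar>h\<bar> * norm ?D < \<bar>of_int k\<bar> * U" using H[rule_format, OF nz] by linarith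
      have "\<bar>of_int k\<bar> * U > 0" using U k by simp
      then show ?thesis using lt by (simp add: divide_less_eq)
    qed
    finally have r: "norm ?r < 1" .
    have "(\<Sum>n. ?r ^ n * ?G) = ?G / (1 - ?r)"
      using suminf_mult2[OF summable_geometric[OF r], of ?G] suminf_geometric[OF r] by simp
    moreover have "1 - ?r \<noteq> 0" using r by auto
    ultimately have "Ik d L U h k B S' S = 1 / (of_int k * of_real U) * (?G / (1 - ?r))"
      unfolding Ik_def ser by simp
    also have "\<dots> = ?G / (of_int k * of_real U - of_real h * ?D)"
      using kU `1 - ?r \<noteq> 0` by (simp add: field_simps)
    finally show ?thesis using c grade_eq[OF S S', of k B] by simp
  qed
qed

lemma Ioff_eq: assumes S: "S \<in> FC d L" and S': "S' \<in> FC d L" and U: "U > 0"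
  and H: "B S' S \<noteq> 0 \<longrightarrow> \<bar>h\<bar> * norm (mv d L S' - mv d L S) < U"
  shows "Ioff d L U h B S' S = (if dv d L S' \<noteq> dv d L S then
      B S' S / ((of_int (int (dv d L S') - int (dv d L S))) * of_real U - of_real h * (mv d L S' - mv d L S)) else 0)"
proof -
  have "Ioff d L U h B S' S = (\<Sum>k\<in>kset d L. if int (dv d L S') - int (dv d L S) = k then
      B S' S / (of_int (int (dv d L S') - int (dv d L S)) * of_real U - of_real h * (mv d L S' - mv d L S)) else 0)"
    unfolding Ioff_def
    by (intro sum.cong refl, subst Ik_eq[OF S S']) (auto simp: kset_def U H)
  also have "\<dots> = (if int (dv d L S') - int (dv d L S) \<in> kset d L then
      B S' S / (of_int (int (dv d L S') - int (dv d L S)) * of_real U - of_real h * (mv d L S' - mv d L S)) else 0)"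
    by (simp add: kset_def)
  also have "\<dots> = (if dv d L S' \<noteq> dv d L S then
      B S' S / (of_int (int (dv d L S') - int (dv d L S)) * of_real U - of_real h * (mv d L S' - mv d L S)) else 0)"
    using dv_le[of d L S] dv_le[of d L S'] unfolding kset_def by auto
  finally show ?thesis .
qed

definition ha :: "site \<Rightarrow> site \<Rightarrow> bool \<times> bool \<Rightarrow> mode" where
  "ha x y e = (if snd e then (x, fst e) else (y, fst e))"
definition hb :: "site \<Rightarrow> site \<Rightarrow> bool \<times> bool \<Rightarrow> mode" where
  "hb x y e = (if snd e then (y, fst e) else (x, fst e))"
definition qq :: "bool \<times> bool \<Rightarrow> complex" where
  "qq e = (if snd e then 1 else -1) * (if fst e then 1 else -1)"

definition one :: "nat \<Rightarrow> nat \<Rightarrow> fconf \<Rightarrow> bool" where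
  "one d L S \<longleftrightarrow> S \<in> FC d L \<and> (\<forall>z\<in>Lam d L. (z, True) \<in> S \<longleftrightarrow> (z, False) \<notin> S)"

lemma sum_UNIV_bb: "(\<Sum>e\<in>(UNIV :: (bool \<times> bool) set). f e) = f (True, True) + f (True, False) + f (False, True) + f (False, False)"
proof -
  have "(UNIV :: (bool \<times> bool) set) = {(True, True), (True, False), (False, True), (False, False)}"
    by auto
  then have "(\<Sum>e\<in>(UNIV :: (bool \<times> bool) set). f e) = (\<Sum>e\<in>{(True, True), (True, False), (False, True), (False, False)}. f e)"
    by (simp only:)
  then show ?thesis by (simp add: add.assoc)
qed

lemma one_dv: "one d L S \<Longrightarrow> dv d L S = 0"
proof -
  assume "one d L S"
  then have "{z \<in> Lam d L. (z, True) \<in> S \<and> (z, False) \<in> S} = {}" unfolding one_def by auto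
  then show ?thesis unfolding dv_def by (simp only: card.empty)
qed

lemma one_card: "one d L S \<Longrightarrow> card S = card (Lam d L)"
proof -
  assume o: "one d L S"
  let ?g = "\<lambda>z. (z, (z, True) \<in> S)"
  have SM: "S \<subseteq> Lam d L \<times> UNIV" using o unfolding one_def FC_def by auto
  have "S = ?g ` Lam d L"
  proof
    show "S \<subseteq> ?g ` Lam d L"
    proof
      fix m assume m: "m \<in> S"
      obtain z s where zs: "m = (z, s)" by (cases m)
      have z: "z \<in> Lam d L" using SM m zs by auto
      have "m = ?g z" using o z m zs unfolding one_def by (cases s) auto
      then show "m \<in> ?g ` Lam d L" using z by blast
    qed
    show "?g ` Lam d L \<subseteq> S" using o unfolding one_def by auto
  qed
  moreover have "inj_on ?g (Lam d L)" by (auto intro: inj_onI)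
  ultimately show ?thesis by (metis card_image)
qed

lemma Pproj_eq: "S \<in> FC d L \<Longrightarrow> Pproj d L S' S = (if S' = S \<and> card S = card (Lam d L) \<and> dv d L S = 0 then 1 else 0)"
  unfolding Pproj_def using Dop_eq[of S d L S] by auto

context
  fixes d L :: nat and x y :: site and t U h :: real
  assumes x: "x \<in> Lam d L" and y: "y \<in> Lam d L" and xy: "x \<noteq> y"
    and ex: "eta x = 1" and ey: "eta y = -1" and U: "U > 0" and hU: "\<bar>h\<bar> < U"
begin

lemma ha_Md: "ha x y e \<in> Md d L" and hb_Md: "hb x y e \<in> Md d L"
  using x y unfolding ha_def hb_def Md_def by auto

lemma wt_hop: "wt (ha x y e) - wt (hb x y e) = qq e"
  unfolding wt_def ha_def hb_def qq_def using ex ey by (cases e) auto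

lemma Top_eq: "Top d L t x y S' S = - of_real t * (\<Sum>e\<in>UNIV. Eop d L (ha x y e) (hb x y e) S' S)"
  unfolding Top_def sum_UNIV_bb by (simp add: UNIV_bool ha_def hb_def ac_simps)

lemma mv_hop': assumes S: "S \<in> FC d L" and nz: "Eop d L (ha x y e) (hb x y e) S' S \<noteq> 0"
  shows "mv d L S' - mv d L S = qq e"
proof -
  have "mv d L S' - mv d L S = wt (ha x y e) - wt (hb x y e)" by (rule mv_hop[OF S ha_Md nz])
  then show ?thesis unfolding wt_hop .
qed

lemma Top_H: assumes S: "S \<in> FC d L" and nz: "Top d L t x y S' S \<noteq> 0"
  shows "\<bar>h\<bar> * norm (mv d L S' - mv d L S) < U"
proof -
  have "(\<Sum>e\<in>UNIV. Eop d L (ha x y e) (hb x y e) S' S) \<noteq> 0"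
    using nz unfolding Top_eq by auto
  then obtain e where "Eop d L (ha x y e) (hb x y e) S' S \<noteq> 0"
    using sum.not_neutral_contains_not_neutral by blast
  then have "mv d L S' - mv d L S = qq e" using mv_hop'[OF S] by blast
  then have "norm (mv d L S' - mv d L S) = 1" unfolding qq_def by auto
  then show ?thesis using hU by simp
qed

lemma FC_hop: "S \<in> FC d L \<Longrightarrow> Eop d L (ha x y e) (hb x y e) K S \<noteq> 0 \<Longrightarrow> K \<in> FC d L"
  using E_nz[of S d L "ha x y e" "hb x y e" K] ha_Md[of e] unfolding FC_def Md_def by auto

lemma dv_hop: assumes o: "one d L S" and nz: "Eop d L (ha x y e) (hb x y e) K S \<noteq> 0"
  shows "dv d L K = 1"
proof -
  have S: "S \<in> FC d L" using o unfolding one_def by auto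
  note h = E_nz[OF S nz]
  obtain s dr where e: "e = (s, dr)" by (cases e)
  define u where "u = (if dr then x else y)"
  define w where "w = (if dr then y else x)"
  have a: "ha x y e = (u, s)" and b: "hb x y e = (w, s)" unfolding ha_def hb_def u_def w_def e by auto
  have uw: "u \<noteq> w" "u \<in> Lam d L" "w \<in> Lam d L" using xy x y unfolding u_def w_def by auto
  have K: "K = insert (u, s) (S - {(w, s)})" and bS: "(w, s) \<in> S" and aS: "(u, s) \<notin> S"
    using h uw unfolding a b by auto
  have uo: "(u, \<not> s) \<in> S" using o aS uw unfolding one_def by (cases s) auto
  have "{z \<in> Lam d L. (z, True) \<in> K \<and> (z, False) \<in> K} = {u}"
  proof (intro set_eqI iffI)
    fix z assume z: "z \<in> {z \<in> Lam d L. (z, True) \<in> K \<and> (z, False) \<in> K}"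
    show "z \<in> {u}"
    proof (rule ccontr)
      assume "z \<notin> {u}"
      then have "(z, True) \<in> S" "(z, False) \<in> S" using z K by auto
      then show False using o z unfolding one_def by auto
    qed
  next
    fix z assume "z \<in> {u}"
    then show "z \<in> {z \<in> Lam d L. (z, True) \<in> K \<and> (z, False) \<in> K}"
      using uw uo K by (cases s) auto
  qed
  then show ?thesis unfolding dv_def by simp
qed

end

definition cw :: "real \<Rightarrow> real \<Rightarrow> bool \<times> bool \<Rightarrow> bool \<times> bool \<Rightarrow> complex" where
  "cw U h e1 e2 = 1 / (- of_real U - of_real h * qq e1) - 1 / (of_real U - of_real h * qq e2)"

context
  fixes d L :: nat and x y :: site and t U h :: real
  assumes x: "x \<in> Lam d L" and y: "y \<in> Lam d L" and xy: "x \<noteq> y"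
    and ex: "eta x = 1" and ey: "eta y = -1" and U: "U > 0" and hU: "\<bar>h\<bar> < U"
begin

abbreviation "EE e \<equiv> Eop d L (ha x y e) (hb x y e)"

lemma T0_prod: "Top d L t x y S' K * Top d L t x y K S =
   (\<Sum>e1\<in>UNIV. \<Sum>e2\<in>UNIV. of_real t ^ 2 * (EE e1 S' K * EE e2 K S))"
  unfolding Top_eq[OF x y xy ex ey U hU] sum_product
  by (simp add: power2_eq_square algebra_simps sum_distrib_left)

lemma X_K: assumes oS: "one d L S" and oS': "one d L S'" and K: "K \<in> FC d L"
  shows "Ioff d L U h (Top d L t x y) S' K * offd d L (Top d L t x y) K S
       - offd d L (Top d L t x y) S' K * Ioff d L U h (Top d L t x y) K S
     = (\<Sum>e1\<in>UNIV. \<Sum>e2\<in>UNIV. of_real t ^ 2 * cw U h e1 e2 * (EE e1 S' K * EE e2 K S))"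
proof -
  have S: "S \<in> FC d L" and S': "S' \<in> FC d L" using oS oS' unfolding one_def by auto
  have d0: "dv d L S = 0" "dv d L S' = 0" using one_dv oS oS' by auto
  have H1: "Top d L t x y S' K \<noteq> 0 \<longrightarrow> \<bar>h\<bar> * norm (mv d L S' - mv d L K) < U"
    using Top_H[OF x y xy ex ey U hU K] by blast
  have H2: "Top d L t x y K S \<noteq> 0 \<longrightarrow> \<bar>h\<bar> * norm (mv d L K - mv d L S) < U"
    using Top_H[OF x y xy ex ey U hU S] by blast
  let ?T = "Top d L t x y"
  show ?thesis
  proof (cases "dv d L K = 0")
    case True
    have "EE e2 K S = 0" for e2
      using dv_hop[OF x y xy ex ey U hU oS, of e2 K] True by auto
    then show ?thesis
      unfolding offd_eq[OF S K] offd_eq[OF K S'] Ioff_eq[where B="Top d L t x y", OF S K U H2] Ioff_eq[where B="Top d L t x y", OF K S' U H1]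
      using True d0 by simp
  next
    case False
    let ?a1 = "of_int (int 0 - int (dv d L K)) * of_real U - of_real h * (mv d L S' - mv d L K) :: complex"
    let ?a2 = "of_int (int (dv d L K) - int 0) * of_real U - of_real h * (mv d L K - mv d L S) :: complex"
    note I2 = Ioff_eq[where B="Top d L t x y", OF S K U H2]
    note I1 = Ioff_eq[where B="Top d L t x y", OF K S' U H1]
    have "Ioff d L U h ?T S' K * offd d L ?T K S - offd d L ?T S' K * Ioff d L U h ?T K S
        = ?T S' K / ?a1 * ?T K S - ?T S' K * (?T K S / ?a2)"
      unfolding offd_eq[OF S K] offd_eq[OF K S'] I1 I2
      using False d0 by simp
    also have "\<dots> = (?T S' K * ?T K S) * (1 / ?a1 - 1 / ?a2)"
      by (simp add: divide_inverse algebra_simps)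
    also have "\<dots> = (\<Sum>e1\<in>UNIV. \<Sum>e2\<in>UNIV. of_real t ^ 2 * (EE e1 S' K * EE e2 K S) * (1 / ?a1 - 1 / ?a2))"
      unfolding T0_prod by (simp add: sum_distrib_right)
    also have "\<dots> = (\<Sum>e1\<in>UNIV. \<Sum>e2\<in>UNIV. of_real t ^ 2 * cw U h e1 e2 * (EE e1 S' K * EE e2 K S))"
    proof (intro sum.cong refl)
      fix e1 e2
      show "of_real t ^ 2 * (EE e1 S' K * EE e2 K S) * (1 / ?a1 - 1 / ?a2) =
            of_real t ^ 2 * cw U h e1 e2 * (EE e1 S' K * EE e2 K S)"
      proof (cases "EE e1 S' K * EE e2 K S = 0")
        case True
        then show ?thesis by (simp del: mult_eq_0_iff)
      next
        case False
        then have n1: "EE e1 S' K \<noteq> 0" and n2: "EE e2 K S \<noteq> 0" by auto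
        have "dv d L K = 1" using dv_hop[OF x y xy ex ey U hU oS n2] .
        moreover have "mv d L K - mv d L S = qq e2" using mv_hop'[OF x y xy ex ey U hU S n2] .
        moreover have "mv d L S' - mv d L K = qq e1" using mv_hop'[OF x y xy ex ey U hU K n1] .
        ultimately have "1 / ?a1 - 1 / ?a2 = cw U h e1 e2" unfolding cw_def by simp
        then show ?thesis by simp
      qed
    qed
    finally show ?thesis .
  qed
qed

lemma X_entry: assumes oS: "one d L S" and oS': "one d L S'"
  shows "Xop d L t U h x y S' S = (1/2) * (\<Sum>e1\<in>UNIV. \<Sum>e2\<in>UNIV.
       of_real t ^ 2 * cw U h e1 e2 * mmul (FC d L) (EE e1) (EE e2) S' S)"
proof -
  have S: "S \<in> FC d L" and S': "S' \<in> FC d L" using oS oS' unfolding one_def by auto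
  have d0: "dv d L S = 0" "dv d L S' = 0" using one_dv oS oS' by auto
  have c0: "card S = card (Lam d L)" "card S' = card (Lam d L)" using one_card oS oS' by auto
  let ?T = "Top d L t x y"
  define G where "G = grade d L 0 (\<lambda>S' S. (1/2) * comm (FC d L) (Ioff d L U h ?T) (offd d L ?T) S' S)"
  have 1: "Xop d L t U h x y S' S = mmul (FC d L) (mmul (FC d L) (Pproj d L) G) (Pproj d L) S' S"
    unfolding Xop_def G_def Let_def ..
  also have "\<dots> = G S' S"
  proof -
    have "mmul (FC d L) (mmul (FC d L) (Pproj d L) G) (Pproj d L) S' S =
       (\<Sum>K\<in>FC d L. if K = S then mmul (FC d L) (Pproj d L) G S' S else 0)"
      unfolding mmul_def[of _ _ "Pproj d L"]
      by (intro sum.cong refl) (auto simp: Pproj_eq[OF S] c0 d0)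
    also have "\<dots> = mmul (FC d L) (Pproj d L) G S' S" using S by (simp add: finite_FC)
    also have "\<dots> = (\<Sum>K\<in>FC d L. if K = S' then G S' S else 0)"
      unfolding mmul_def
      by (intro sum.cong refl) (auto simp: Pproj_eq c0 d0)
    also have "\<dots> = G S' S" using S' by (simp add: finite_FC)
    finally show ?thesis .
  qed
  also have "\<dots> = (1/2) * comm (FC d L) (Ioff d L U h ?T) (offd d L ?T) S' S"
    unfolding G_def grade_eq[OF S S'] using d0 by simp
  also have "comm (FC d L) (Ioff d L U h ?T) (offd d L ?T) S' S =
     (\<Sum>K\<in>FC d L. Ioff d L U h ?T S' K * offd d L ?T K S - offd d L ?T S' K * Ioff d L U h ?T K S)"
    unfolding comm_def mmul_def by (simp add: sum_subtractf)
  also have "\<dots> = (\<Sum>K\<in>FC d L. \<Sum>e1\<in>UNIV. \<Sum>e2\<in>UNIV. of_real t ^ 2 * cw U h e1 e2 * (EE e1 S' K * EE e2 K S))"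
    by (intro sum.cong refl X_K[OF oS oS'])
  also have "\<dots> = (\<Sum>e1\<in>UNIV. \<Sum>K\<in>FC d L. \<Sum>e2\<in>UNIV. of_real t ^ 2 * cw U h e1 e2 * (EE e1 S' K * EE e2 K S))"
    by (rule sum.swap)
  also have "\<dots> = (\<Sum>e1\<in>UNIV. \<Sum>e2\<in>UNIV. \<Sum>K\<in>FC d L. of_real t ^ 2 * cw U h e1 e2 * (EE e1 S' K * EE e2 K S))"
    by (intro sum.cong refl sum.swap)
  also have "\<dots> = (\<Sum>e1\<in>UNIV. \<Sum>e2\<in>UNIV. of_real t ^ 2 * cw U h e1 e2 * mmul (FC d L) (EE e1) (EE e2) S' S)"
    unfolding mmul_def by (simp add: sum_distrib_left)
  finally show ?thesis .
qed

end

definition Sg :: "nat \<Rightarrow> nat \<Rightarrow> (site \<Rightarrow> bool) \<Rightarrow> fconf" where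
  "Sg d L \<sigma> = (\<lambda>z. (z, \<sigma> z)) ` Lam d L"

lemma app_if: "app C A (\<lambda>S. if P then f S else 0) = (\<lambda>S. if P then app C A f S else 0)"
  by (cases P) (simp_all add: app_zero)

lemma Sg_one: "one d L (Sg d L \<sigma>)"
  unfolding one_def Sg_def FC_def by auto

lemma Sg_inj: "\<sigma> \<in> SC d L \<Longrightarrow> \<tau> \<in> SC d L \<Longrightarrow> Sg d L \<sigma> = Sg d L \<tau> \<longleftrightarrow> \<sigma> = \<tau>"
proof
  assume s: "\<sigma> \<in> SC d L" "\<tau> \<in> SC d L" and e: "Sg d L \<sigma> = Sg d L \<tau>"
  show "\<sigma> = \<tau>"
  proof
    fix z
    show "\<sigma> z = \<tau> z"
    proof (cases "z \<in> Lam d L")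
      case True
      then have "(z, \<sigma> z) \<in> Sg d L \<tau>" using e unfolding Sg_def by blast
      then show ?thesis unfolding Sg_def by auto
    next
      case False
      then show ?thesis using s unfolding SC_def by auto
    qed
  qed
qed simp

lemma finite_SC: "finite (SC d L)"
proof -
  have "SC d L \<subseteq> (\<lambda>A z. z \<in> A) ` Pow (Lam d L)"
  proof
    fix \<sigma> assume s: "\<sigma> \<in> SC d L"
    have "\<sigma> = (\<lambda>z. z \<in> {w \<in> Lam d L. \<sigma> w})" using s unfolding SC_def by auto
    then show "\<sigma> \<in> (\<lambda>A z. z \<in> A) ` Pow (Lam d L)" by blast
  qed
  then show ?thesis using finite_Lam by (auto intro: finite_subset)
qed

context
  fixes d L :: nat and x y :: site and xs :: "site list"
  assumes x: "x \<in> Lam d L" and y: "y \<in> Lam d L" and xy: "x \<noteq> y"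
    and dxs: "distinct xs" and sxs: "set xs = Lam d L"
begin

definition "rest = removeAll y (removeAll x xs)"
definition "s0 = ((-1) ^ length (takeWhile (\<lambda>w. w \<noteq> x) xs) *
                  (-1) ^ length (takeWhile (\<lambda>w. w \<noteq> y) (removeAll x xs)) :: complex)"
definition "Q \<sigma> \<alpha> \<beta> = app (FC d L) (cre \<alpha>) (app (FC d L) (cre \<beta>) (fvec d L rest \<sigma>))"
definition "eps \<sigma> = fvec d L xs \<sigma> (Sg d L \<sigma>)"

lemma rest_sub: "set rest \<subseteq> Lam d L" and rest_xy: "x \<notin> set rest" "y \<notin> set rest"
  unfolding rest_def using sxs by auto

lemma fvec_fact: "fvec d L xs \<sigma> = (\<lambda>S. s0 * Q \<sigma> (x, \<sigma> x) (y, \<sigma> y) S)"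
proof -
  have 1: "fvec d L xs \<sigma> = (\<lambda>S. (-1) ^ length (takeWhile (\<lambda>w. w \<noteq> x) xs) *
      app (FC d L) (cre (x, \<sigma> x)) (fvec d L (removeAll x xs) \<sigma>) S)"
    using fvec_pull[OF dxs _ , of d L x \<sigma>] x sxs by auto
  have 2: "fvec d L (removeAll x xs) \<sigma> = (\<lambda>S. (-1) ^ length (takeWhile (\<lambda>w. w \<noteq> y) (removeAll x xs)) *
      app (FC d L) (cre (y, \<sigma> y)) (fvec d L rest \<sigma>) S)"
    unfolding rest_def using fvec_pull[of "removeAll x xs" d L y \<sigma>] y xy sxs dxs by (auto simp: distinct_removeAll)
  show ?thesis unfolding 1 2 app_scale Q_def s0_def by (simp add: mult.assoc)
qed

lemma fvec_form: "fvec d L xs \<sigma> = (\<lambda>S. if S = Sg d L \<sigma> then eps \<sigma> else 0)" and eps_pm: "eps \<sigma> = 1 \<or> eps \<sigma> = -1"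
proof -
  obtain c where c: "c = 1 \<or> c = -1" and f: "fvec d L xs \<sigma> = (\<lambda>S. if S = (\<lambda>z. (z, \<sigma> z)) ` set xs then c else 0)"
    using fvec_val[OF dxs, of d L \<sigma>] sxs by auto
  have "eps \<sigma> = c" unfolding eps_def f Sg_def sxs by simp
  then show "fvec d L xs \<sigma> = (\<lambda>S. if S = Sg d L \<sigma> then eps \<sigma> else 0)" "eps \<sigma> = 1 \<or> eps \<sigma> = -1"
    using f c unfolding Sg_def sxs by auto
qed

lemma Q_cong: assumes h: "\<And>z. z \<notin> {x, y} \<Longrightarrow> \<sigma> z = \<tau> z" shows "Q \<sigma> = Q \<tau>"
proof -
  have "fvec d L rest \<sigma> = fvec d L rest \<tau>"
  proof (rule fvec_cong)
    fix z assume "z \<in> set rest"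
    then have "z \<notin> {x, y}" using rest_xy by auto
    then show "\<sigma> z = \<tau> z" by (rule h)
  qed
  then show ?thesis unfolding Q_def by (simp only:)
qed

lemma supp_R: "supp (FC d L) (fvec d L rest \<sigma>)" using supp_fvec[OF rest_sub] .

lemma Q_anti: "\<alpha> \<in> Md d L \<Longrightarrow> \<beta> \<in> Md d L \<Longrightarrow> Q \<sigma> \<beta> \<alpha> = (\<lambda>S. - Q \<sigma> \<alpha> \<beta> S)"
  unfolding Q_def by (intro ext) (rule AC1[OF supp_R])

lemma E_Q: assumes a: "a \<in> Md d L" and b: "b \<in> {x, y} \<times> UNIV" and al: "\<alpha> \<in> Md d L" and be: "\<beta> \<in> Md d L"
  shows "app (FC d L) (Eop d L a b) (Q \<sigma> \<alpha> \<beta>) =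
    (\<lambda>S. (if b = \<alpha> then Q \<sigma> a \<beta> S else 0) + (if b = \<beta> then Q \<sigma> \<alpha> a S else 0))"
proof -
  have bM: "b \<in> Md d L" using b x y unfolding Md_def by auto
  have vac: "app (FC d L) (Eop d L a b) (fvec d L rest \<sigma>) = (\<lambda>S. 0)"
    using E_vac[OF rest_sub a bM] b rest_xy by auto
  have inner: "app (FC d L) (Eop d L a b) (app (FC d L) (cre \<beta>) (fvec d L rest \<sigma>)) =
     (\<lambda>S. if b = \<beta> then app (FC d L) (cre a) (fvec d L rest \<sigma>) S else 0)"
    unfolding E_comm[OF supp_R a bM be] vac app_zero by simp
  show ?thesis
    unfolding Q_def E_comm[OF supp_cv[OF supp_R be] a bM al] inner app_if by simp
qed

definition "ev \<sigma>' F = cnj (eps \<sigma>') * s0 * F (Sg d L \<sigma>')"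

lemma ev_add: "ev \<sigma>' (\<lambda>S. f S + g S) = ev \<sigma>' f + ev \<sigma>' g"
  unfolding ev_def by (simp add: algebra_simps)
lemma ev_if: "ev \<sigma>' (\<lambda>S. if P then f S else 0) = (if P then ev \<sigma>' f else 0)"
  unfolding ev_def by simp
lemma ev_neg: "ev \<sigma>' (\<lambda>S. - f S) = - ev \<sigma>' f"
  unfolding ev_def by simp

lemma upd_SC: "\<sigma> \<in> SC d L \<Longrightarrow> \<sigma>(x := u, y := w) \<in> SC d L"
  using x y unfolding SC_def by auto

lemma ev_Q: assumes s: "\<sigma> \<in> SC d L" and s': "\<sigma>' \<in> SC d L"
  shows "ev \<sigma>' (Q \<sigma> (x, u) (y, w)) =
    (if (\<forall>z. z \<notin> {x, y} \<longrightarrow> \<sigma>' z = \<sigma> z) \<and> \<sigma>' x = u \<and> \<sigma>' y = w then 1 else 0)"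
proof -
  define \<tau> where "\<tau> = \<sigma>(x := u, y := w)"
  have t: "\<tau> \<in> SC d L" unfolding \<tau>_def by (rule upd_SC[OF s])
  have "Q \<sigma> = Q \<tau>" by (rule Q_cong) (auto simp: \<tau>_def)
  moreover have "\<tau> x = u" "\<tau> y = w" unfolding \<tau>_def using xy by auto
  ultimately have "Q \<sigma> (x, u) (y, w) = Q \<tau> (x, \<tau> x) (y, \<tau> y)" by simp
  then have "s0 * Q \<sigma> (x, u) (y, w) (Sg d L \<sigma>') = fvec d L xs \<tau> (Sg d L \<sigma>')"
    unfolding fvec_fact[of \<tau>] by simp
  then have e: "s0 * Q \<sigma> (x, u) (y, w) (Sg d L \<sigma>') = (if Sg d L \<sigma>' = Sg d L \<tau> then eps \<tau> else 0)"
    unfolding fvec_form .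
  have iff: "(\<sigma>' = \<tau>) = ((\<forall>z. z \<notin> {x, y} \<longrightarrow> \<sigma>' z = \<sigma> z) \<and> \<sigma>' x = u \<and> \<sigma>' y = w)"
  proof
    assume "\<sigma>' = \<tau>"
    then show "(\<forall>z. z \<notin> {x, y} \<longrightarrow> \<sigma>' z = \<sigma> z) \<and> \<sigma>' x = u \<and> \<sigma>' y = w"
      unfolding \<tau>_def using xy by simp
  next
    assume h: "(\<forall>z. z \<notin> {x, y} \<longrightarrow> \<sigma>' z = \<sigma> z) \<and> \<sigma>' x = u \<and> \<sigma>' y = w"
    show "\<sigma>' = \<tau>"
    proof
      fix z show "\<sigma>' z = \<tau> z" unfolding \<tau>_def using h by (cases "z = x"; cases "z = y") auto
    qed
  qed
  show ?thesis
  proof (cases "\<sigma>' = \<tau>")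
    case True
    have "cnj (eps \<sigma>') * eps \<sigma>' = 1" using eps_pm[of \<sigma>'] by auto
    then show ?thesis unfolding ev_def using True e iff by (simp add: mult.assoc)
  next
    case False
    then have "Sg d L \<sigma>' \<noteq> Sg d L \<tau>" using Sg_inj[OF s' t] by simp
    moreover have "\<not> ((\<forall>z. z \<notin> {x, y} \<longrightarrow> \<sigma>' z = \<sigma> z) \<and> \<sigma>' x = u \<and> \<sigma>' y = w)"
      using False iff by simp
    ultimately show ?thesis unfolding ev_def using e by (simp only: if_False mult.assoc) simp
  qed
qed

lemma Uconj_red: assumes s: "\<sigma> \<in> SC d L" and s': "\<sigma>' \<in> SC d L"
  shows "Uconj d L xs X \<sigma>' \<sigma> = cnj (eps \<sigma>') * X (Sg d L \<sigma>') (Sg d L \<sigma>) * eps \<sigma>"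
proof -
  have F: "Sg d L \<sigma> \<in> FC d L" "Sg d L \<sigma>' \<in> FC d L" using Sg_one unfolding one_def by auto
  have "Uconj d L xs X \<sigma>' \<sigma> = (\<Sum>S'\<in>FC d L. if S' = Sg d L \<sigma>' then
      (\<Sum>S\<in>FC d L. if S = Sg d L \<sigma> then cnj (eps \<sigma>') * X S' S * eps \<sigma> else 0) else 0)"
    unfolding Uconj_def fvec_form by (intro sum.cong refl) (auto intro!: sum.cong)
  also have "\<dots> = cnj (eps \<sigma>') * X (Sg d L \<sigma>') (Sg d L \<sigma>) * eps \<sigma>"
    using F by (simp add: finite_FC)
  finally show ?thesis .
qed

lemma mmul_eps: assumes s: "\<sigma> \<in> SC d L"
  shows "mmul (FC d L) A B S' (Sg d L \<sigma>) * eps \<sigma> =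
         s0 * app (FC d L) A (app (FC d L) B (Q \<sigma> (x, \<sigma> x) (y, \<sigma> y))) S'"
proof -
  have F: "Sg d L \<sigma> \<in> FC d L" using Sg_one unfolding one_def by auto
  have "app (FC d L) (mmul (FC d L) A B) (fvec d L xs \<sigma>) S' = mmul (FC d L) A B S' (Sg d L \<sigma>) * eps \<sigma>"
    unfolding app_def fvec_form using F by (simp add: finite_FC if_distrib cong: if_cong)
  moreover have "app (FC d L) (mmul (FC d L) A B) (fvec d L xs \<sigma>) S' =
       s0 * app (FC d L) A (app (FC d L) B (Q \<sigma> (x, \<sigma> x) (y, \<sigma> y))) S'"
    unfolding app_mmul fvec_fact app_scale ..
  ultimately show ?thesis by simp
qed

end

lemma Sop_eq: "Sop z a \<sigma>' \<sigma> = (if (\<forall>w. w \<noteq> z \<longrightarrow> \<sigma>' w = \<sigma> w) then (1/2) * pauli a (\<sigma>' z) (\<sigma> z) else 0)"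
  unfolding Sop_def siteop_def by simp

lemma SS_eq: assumes x: "x \<in> Lam d L" and xy: "x \<noteq> y" and s: "\<sigma> \<in> SC d L" and s': "\<sigma>' \<in> SC d L"
  shows "mmul (SC d L) (Sop x a) (Sop y a) \<sigma>' \<sigma> =
    (if (\<forall>w. w \<notin> {x, y} \<longrightarrow> \<sigma>' w = \<sigma> w) then (1/4) * (pauli a (\<sigma>' x) (\<sigma> x) * pauli a (\<sigma>' y) (\<sigma> y)) else 0)"
proof -
  define \<tau>0 where "\<tau>0 = \<sigma>'(x := \<sigma> x)"
  have t0: "\<tau>0 \<in> SC d L" using s' x unfolding \<tau>0_def SC_def by auto
  have "Sop x a \<sigma>' \<tau> * Sop y a \<tau> \<sigma> = (if \<tau> = \<tau>0 then
     (if (\<forall>w. w \<notin> {x, y} \<longrightarrow> \<sigma>' w = \<sigma> w) then (1/4) * (pauli a (\<sigma>' x) (\<sigma> x) * pauli a (\<sigma>' y) (\<sigma> y)) else 0) else 0)" for \<tau>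
  proof (cases "\<tau> = \<tau>0")
    case True
    have c1: "(\<forall>w. w \<noteq> x \<longrightarrow> \<sigma>' w = \<tau> w)" using True unfolding \<tau>0_def by simp
    have c2: "(\<forall>w. w \<noteq> y \<longrightarrow> \<tau> w = \<sigma> w) \<longleftrightarrow> (\<forall>w. w \<notin> {x, y} \<longrightarrow> \<sigma>' w = \<sigma> w)"
      using True xy unfolding \<tau>0_def by auto
    have v: "\<tau> x = \<sigma> x" "\<tau> y = \<sigma>' y" using True xy unfolding \<tau>0_def by auto
    have 1: "Sop x a \<sigma>' \<tau> = (1/2) * pauli a (\<sigma>' x) (\<sigma> x)" unfolding Sop_eq using c1 v by simp
    have 2: "Sop y a \<tau> \<sigma> = (if (\<forall>w. w \<notin> {x, y} \<longrightarrow> \<sigma>' w = \<sigma> w) then (1/2) * pauli a (\<sigma>' y) (\<sigma> y) else 0)"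
      unfolding Sop_eq c2 v ..
    show ?thesis unfolding 1 2 using True by auto
  next
    case False
    have "\<not> ((\<forall>w. w \<noteq> x \<longrightarrow> \<sigma>' w = \<tau> w) \<and> (\<forall>w. w \<noteq> y \<longrightarrow> \<tau> w = \<sigma> w))"
    proof
      assume h: "(\<forall>w. w \<noteq> x \<longrightarrow> \<sigma>' w = \<tau> w) \<and> (\<forall>w. w \<noteq> y \<longrightarrow> \<tau> w = \<sigma> w)"
      have "\<tau> = \<tau>0"
      proof
        fix w show "\<tau> w = \<tau>0 w" unfolding \<tau>0_def using h xy by (cases "w = x") auto
      qed
      then show False using False by simp
    qed
    then show ?thesis unfolding Sop_eq using False by auto
  qed
  then have "mmul (SC d L) (Sop x a) (Sop y a) \<sigma>' \<sigma> = (\<Sum>\<tau>\<in>SC d L. if \<tau> = \<tau>0 then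
     (if (\<forall>w. w \<notin> {x, y} \<longrightarrow> \<sigma>' w = \<sigma> w) then (1/4) * (pauli a (\<sigma>' x) (\<sigma> x) * pauli a (\<sigma>' y) (\<sigma> y)) else 0) else 0)"
    unfolding mmul_def by simp
  also have "\<dots> = (if (\<forall>w. w \<notin> {x, y} \<longrightarrow> \<sigma>' w = \<sigma> w) then (1/4) * (pauli a (\<sigma>' x) (\<sigma> x) * pauli a (\<sigma>' y) (\<sigma> y)) else 0)"
    using t0 by (simp add: finite_SC)
  finally show ?thesis .
qed

context
  fixes d L :: nat and x y :: site and xs :: "site list" and t U h :: real
  assumes x: "x \<in> Lam d L" and y: "y \<in> Lam d L" and xy: "x \<noteq> y"
    and ex: "eta x = 1" and ey: "eta y = -1" and U: "U > 0" and hU: "\<bar>h\<bar> < U"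
    and dxs: "distinct xs" and sxs: "set xs = Lam d L"
begin

lemma Md_x: "(x, b) \<in> Md d L" "(y, b) \<in> Md d L" "(x, b) \<in> {x, y} \<times> UNIV" "(y, b) \<in> {x, y} \<times> UNIV"
  using x y unfolding Md_def by auto

lemma Q_yx: "Q d L x y xs \<sigma> (y, w) (x, u) = (\<lambda>S. - Q d L x y xs \<sigma> (x, u) (y, w) S)"
  using Q_anti[OF x y xy dxs sxs Md_x(1) Md_x(2)] .

lemma LHS1: assumes s: "\<sigma> \<in> SC d L" and s': "\<sigma>' \<in> SC d L"
  shows "Uconj d L xs (Xop d L t U h x y) \<sigma>' \<sigma> = (1/2) * (\<Sum>e1\<in>UNIV. \<Sum>e2\<in>UNIV.
     of_real t ^ 2 * cw U h e1 e2 * ev d L x y xs \<sigma>' (app (FC d L) (Eop d L (ha x y e1) (hb x y e1))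
        (app (FC d L) (Eop d L (ha x y e2) (hb x y e2)) (Q d L x y xs \<sigma> (x, \<sigma> x) (y, \<sigma> y)))))"
proof -
  have o: "one d L (Sg d L \<sigma>)" "one d L (Sg d L \<sigma>')" by (rule Sg_one)+
  have "Uconj d L xs (Xop d L t U h x y) \<sigma>' \<sigma> =
     cnj (eps d L xs \<sigma>') * Xop d L t U h x y (Sg d L \<sigma>') (Sg d L \<sigma>) * eps d L xs \<sigma>"
    by (rule Uconj_red[OF x y xy dxs sxs s s'])
  also have "\<dots> = (1/2) * (\<Sum>e1\<in>UNIV. \<Sum>e2\<in>UNIV. of_real t ^ 2 * cw U h e1 e2 *
      (cnj (eps d L xs \<sigma>') * (mmul (FC d L) (Eop d L (ha x y e1) (hb x y e1)) (Eop d L (ha x y e2) (hb x y e2))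
        (Sg d L \<sigma>') (Sg d L \<sigma>) * eps d L xs \<sigma>)))"
    unfolding X_entry[OF x y xy ex ey U hU o] by (simp add: sum_distrib_left sum_distrib_right algebra_simps)
  also have "\<dots> = (1/2) * (\<Sum>e1\<in>UNIV. \<Sum>e2\<in>UNIV.
     of_real t ^ 2 * cw U h e1 e2 * ev d L x y xs \<sigma>' (app (FC d L) (Eop d L (ha x y e1) (hb x y e1))
        (app (FC d L) (Eop d L (ha x y e2) (hb x y e2)) (Q d L x y xs \<sigma> (x, \<sigma> x) (y, \<sigma> y)))))"
    unfolding mmul_eps[OF x y xy dxs sxs s] ev_def[OF x y xy dxs sxs] by (simp add: algebra_simps)
  finally show ?thesis .
qed

lemma ev_zero: "ev d L x y xs \<sigma>' (\<lambda>S. 0) = 0"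
  unfolding ev_def[OF x y xy dxs sxs] by simp

definition evm :: "bool \<Rightarrow> (site \<Rightarrow> bool) \<Rightarrow> mode \<Rightarrow> mode \<Rightarrow> complex" where
  "evm A \<sigma>' m1 m2 = (if fst m1 = x \<and> fst m2 = y then (if A \<and> \<sigma>' x = snd m1 \<and> \<sigma>' y = snd m2 then 1 else 0)
     else if fst m1 = y \<and> fst m2 = x then - (if A \<and> \<sigma>' x = snd m2 \<and> \<sigma>' y = snd m1 then 1 else 0) else 0)"

lemma ev_Q_gen: assumes s: "\<sigma> \<in> SC d L" and s': "\<sigma>' \<in> SC d L" and A: "A = (\<forall>z. z \<notin> {x, y} \<longrightarrow> \<sigma>' z = \<sigma> z)"
  and m1: "m1 \<in> {x, y} \<times> UNIV" and m2: "m2 \<in> {x, y} \<times> UNIV"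
  shows "ev d L x y xs \<sigma>' (Q d L x y xs \<sigma> m1 m2) = evm A \<sigma>' m1 m2"
proof -
  obtain z1 u where 1: "m1 = (z1, u)" and z1: "z1 = x \<or> z1 = y" using m1 by auto
  obtain z2 w where 2: "m2 = (z2, w)" and z2: "z2 = x \<or> z2 = y" using m2 by auto
  have same: "ev d L x y xs \<sigma>' (Q d L x y xs \<sigma> (z, u) (z, w)) = 0" if "z \<in> Lam d L" for z u w
  proof -
    have R: "supp (FC d L) (fvec d L (rest x y xs) \<sigma>)" by (rule supp_R[OF x y xy dxs sxs])
    have m: "(z, w) \<in> Md d L" using that unfolding Md_def by auto
    have "Q d L x y xs \<sigma> (z, u) (z, w) (Sg d L \<sigma>') = 0"
      unfolding Q_def[OF x y xy dxs sxs] cv_eq[OF supp_cv[OF R m]] cv_eq[OF R]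
      unfolding Sg_def by auto
    then show ?thesis unfolding ev_def[OF x y xy dxs sxs] by simp
  qed
  have evQ: "ev d L x y xs \<sigma>' (Q d L x y xs \<sigma> (x, u) (y, w)) = (if A \<and> \<sigma>' x = u \<and> \<sigma>' y = w then 1 else 0)" for u w
    unfolding A by (rule ev_Q[OF x y xy dxs sxs s s'])
  from z1 z2 show ?thesis
  proof (elim disjE)
    assume "z1 = x" "z2 = x" then show ?thesis using same[OF x] xy by (simp add: 1 2 evm_def)
  next
    assume "z1 = x" "z2 = y" then show ?thesis using xy by (simp add: 1 2 evm_def evQ)
  next
    assume "z1 = y" "z2 = x" then show ?thesis using xy
      by (simp add: 1 2 evm_def evQ Q_yx ev_neg[OF x y xy dxs sxs])
  next
    assume "z1 = y" "z2 = y" then show ?thesis using same[OF y] xy by (simp add: 1 2 evm_def)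
  qed
qed

lemma ev_EEQ: assumes s: "\<sigma> \<in> SC d L" and s': "\<sigma>' \<in> SC d L" and A: "A = (\<forall>z. z \<notin> {x, y} \<longrightarrow> \<sigma>' z = \<sigma> z)"
  and a1: "a1 \<in> {x, y} \<times> UNIV" and b1: "b1 \<in> {x, y} \<times> UNIV" and a2: "a2 \<in> {x, y} \<times> UNIV" and b2: "b2 \<in> {x, y} \<times> UNIV"
  and al: "\<alpha> \<in> {x, y} \<times> UNIV" and be: "\<beta> \<in> {x, y} \<times> UNIV"
  shows "ev d L x y xs \<sigma>' (app (FC d L) (Eop d L a1 b1) (app (FC d L) (Eop d L a2 b2) (Q d L x y xs \<sigma> \<alpha> \<beta>))) =
    (if b2 = \<alpha> then (if b1 = a2 then evm A \<sigma>' a1 \<beta> else 0) + (if b1 = \<beta> then evm A \<sigma>' a2 a1 else 0) else 0) +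
    (if b2 = \<beta> then (if b1 = \<alpha> then evm A \<sigma>' a1 a2 else 0) + (if b1 = a2 then evm A \<sigma>' \<alpha> a1 else 0) else 0)"
proof -
  have M: "m \<in> {x, y} \<times> UNIV \<Longrightarrow> m \<in> Md d L" for m using x y unfolding Md_def by auto
  note EQ = E_Q[OF x y xy dxs sxs]
  note eQ = ev_Q_gen[OF s s' A]
  show ?thesis
    unfolding EQ[OF M[OF a2] b2 M[OF al] M[OF be]] app_add app_if
      EQ[OF M[OF a1] b1 M[OF a2] M[OF be]] EQ[OF M[OF a1] b1 M[OF al] M[OF a2]]
      ev_add[OF x y xy dxs sxs] ev_if[OF x y xy dxs sxs]
      eQ[OF a1 be] eQ[OF a2 a1] eQ[OF a1 a2] eQ[OF al a1]
    by simp
qed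

lemma main_eq: assumes s: "\<sigma> \<in> SC d L" and s': "\<sigma>' \<in> SC d L"
  shows "Uconj d L xs (Xop d L t U h x y) \<sigma>' \<sigma> =
           - of_real (Jxy t U h) * Bspin d L x y \<sigma>' \<sigma>
           + of_real (bxy t U h) * (Sop x 3 \<sigma>' \<sigma> - Sop y 3 \<sigma>' \<sigma>)"
proof -
  define A where "A = (\<forall>z. z \<notin> {x, y} \<longrightarrow> \<sigma>' z = \<sigma> z)"
  have hm: "ha x y e \<in> {x, y} \<times> UNIV" "hb x y e \<in> {x, y} \<times> UNIV" for e unfolding ha_def hb_def by auto
  have pm: "(x, b) \<in> {x, y} \<times> UNIV" "(y, b) \<in> {x, y} \<times> UNIV" for b by auto
  note EEQ = ev_EEQ[OF s s' A_def hm(1) hm(2) hm(1) hm(2) pm(1) pm(2)]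
  have L: "Uconj d L xs (Xop d L t U h x y) \<sigma>' \<sigma> = (1/2) * (\<Sum>e1\<in>UNIV. \<Sum>e2\<in>UNIV.
     of_real t ^ 2 * cw U h e1 e2 * 
    ((if hb x y e2 = (x, \<sigma> x) then (if hb x y e1 = ha x y e2 then evm A \<sigma>' (ha x y e1) (y, \<sigma> y) else 0) + (if hb x y e1 = (y, \<sigma> y) then evm A \<sigma>' (ha x y e2) (ha x y e1) else 0) else 0) +
    (if hb x y e2 = (y, \<sigma> y) then (if hb x y e1 = (x, \<sigma> x) then evm A \<sigma>' (ha x y e1) (ha x y e2) else 0) + (if hb x y e1 = ha x y e2 then evm A \<sigma>' (x, \<sigma> x) (ha x y e1) else 0) else 0)))"
    unfolding LHS1[OF s s'] EEQ ..
  have L2: "Uconj d L xs (Xop d L t U h x y) \<sigma>' \<sigma> = (1/2) * of_real t ^ 2 * (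
     (if A \<and> \<sigma> x \<noteq> \<sigma> y \<and> \<sigma>' x = \<sigma> x \<and> \<sigma>' y = \<sigma> y then
        (if \<sigma> x then 2 * cw U h (False, False) (False, True) else 2 * cw U h (True, False) (True, True)) else 0)
   + (if A \<and> \<sigma> x \<noteq> \<sigma> y \<and> \<sigma>' x = \<sigma> y \<and> \<sigma>' y = \<sigma> x then
        (if \<sigma> x then - 2 * cw U h (True, False) (False, True) else - 2 * cw U h (False, False) (True, True)) else 0))"
    unfolding L sum_UNIV_bb
    apply (cases "\<sigma> x"; cases "\<sigma> y"; cases A; cases "\<sigma>' x"; cases "\<sigma>' y")
    apply (simp_all add: ha_def hb_def evm_def xy xy[symmetric] cw_def qq_def)
    apply (simp_all add: algebra_simps)
    done
  have mideq: "mid \<sigma>' \<sigma> = (if A \<and> \<sigma>' x = \<sigma> x \<and> \<sigma>' y = \<sigma> y then 1 else 0)"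
  proof -
    have "(\<sigma>' = \<sigma>) = (A \<and> \<sigma>' x = \<sigma> x \<and> \<sigma>' y = \<sigma> y)"
    proof
      assume h: "A \<and> \<sigma>' x = \<sigma> x \<and> \<sigma>' y = \<sigma> y"
      show "\<sigma>' = \<sigma>"
      proof
        fix z show "\<sigma>' z = \<sigma> z" using h unfolding A_def by (cases "z = x"; cases "z = y") auto
      qed
    qed (simp add: A_def)
    then show ?thesis unfolding mid_def by simp
  qed
  have SSeq: "mmul (SC d L) (Sop x a) (Sop y a) \<sigma>' \<sigma> =
    (if A then (1/4) * (pauli a (\<sigma>' x) (\<sigma> x) * pauli a (\<sigma>' y) (\<sigma> y)) else 0)" for a
    unfolding A_def by (rule SS_eq[OF x xy s s'])
  have Sx: "Sop x 3 \<sigma>' \<sigma> = (if A \<and> \<sigma>' y = \<sigma> y then (1/2) * pauli 3 (\<sigma>' x) (\<sigma> x) else 0)"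
  proof -
    have "(\<forall>w. w \<noteq> x \<longrightarrow> \<sigma>' w = \<sigma> w) = (A \<and> \<sigma>' y = \<sigma> y)"
      unfolding A_def using xy by auto
    then show ?thesis unfolding Sop_eq by simp
  qed
  have Sy: "Sop y 3 \<sigma>' \<sigma> = (if A \<and> \<sigma>' x = \<sigma> x then (1/2) * pauli 3 (\<sigma>' y) (\<sigma> y) else 0)"
  proof -
    have "(\<forall>w. w \<noteq> y \<longrightarrow> \<sigma>' w = \<sigma> w) = (A \<and> \<sigma>' x = \<sigma> x)"
      unfolding A_def using xy by auto
    then show ?thesis unfolding Sop_eq by simp
  qed
  have r: "U + h > 0" "U - h > 0" using hU by (auto simp: abs_less_iff)
  define P where "P = 1 / (complex_of_real U + complex_of_real h)"
  define M where "M = 1 / (complex_of_real U - complex_of_real h)"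
  have cwE: "cw U h e1 e2 = (if qq e1 = 1 then - P else - M) - (if qq e2 = 1 then M else P)" for e1 e2
  proof -
    have q: "qq e = 1 \<or> qq e = -1" for e unfolding qq_def by auto
    have z1: "- complex_of_real U - complex_of_real h * 1 = - (complex_of_real U + complex_of_real h)" by simp
    have z2: "- complex_of_real U - complex_of_real h * (-1) = - (complex_of_real U - complex_of_real h)" by simp
    have z3: "complex_of_real U - complex_of_real h * 1 = complex_of_real U - complex_of_real h" by simp
    have z4: "complex_of_real U - complex_of_real h * (-1) = complex_of_real U + complex_of_real h" by simp
    have a: "1 / (- complex_of_real U - complex_of_real h * qq e1) = (if qq e1 = 1 then - P else - M)"
    proof (cases "qq e1 = 1")
      case True
      then show ?thesis unfolding P_def by (simp only: True z1 divide_minus_right if_True)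
    next
      case False
      then have "qq e1 = -1" using q[of e1] by blast
      then show ?thesis unfolding M_def using False by (simp only: z2 divide_minus_right if_False)
    qed
    have b: "1 / (complex_of_real U - complex_of_real h * qq e2) = (if qq e2 = 1 then M else P)"
    proof (cases "qq e2 = 1")
      case True
      then show ?thesis unfolding M_def by (simp only: True z3 if_True)
    next
      case False
      then have "qq e2 = -1" using q[of e2] by blast
      then show ?thesis unfolding P_def using False by (simp only: z4 if_False)
    qed
    show ?thesis unfolding cw_def a b ..
  qed
  have JE: "complex_of_real (Jxy t U h) = 2 * complex_of_real t ^ 2 * (P + M)"
  proof -
    have "Jxy t U h = 2 * t^2 * (1 / (U + h) + 1 / (U - h))"
      unfolding Jxy_def using r by (simp add: field_simps power2_eq_square)
    then show ?thesis unfolding P_def M_def by simp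
  qed
  have bE: "complex_of_real (bxy t U h) = complex_of_real t ^ 2 * (M - P)"
  proof -
    have "bxy t U h = t^2 * (1 / (U - h) - 1 / (U + h))"
      unfolding bxy_def using r by (simp add: field_simps power2_eq_square)
    then show ?thesis unfolding P_def M_def by simp
  qed
  show ?thesis
    unfolding L2 Bspin_def mideq SSeq Sx Sy cwE JE bE
    apply (cases "\<sigma> x"; cases "\<sigma> y"; cases A; cases "\<sigma>' x"; cases "\<sigma>' y")
    apply (simp_all add: pauli_def qq_def algebra_simps)
    done
qed

definition RHS0 :: "real \<Rightarrow> real \<Rightarrow> real \<Rightarrow> bool \<Rightarrow> bool \<Rightarrow> bool \<Rightarrow> bool \<Rightarrow> complex" where
  "RHS0 t' U' h' a' b' a b = - of_real (Jxy t' U' h') * ((1/4) * (if a' = a \<and> b' = b then 1 else 0)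
     - (\<Sum>k\<in>{1,2,3::nat}. (1/4) * (pauli k a' a * pauli k b' b)))
     + of_real (bxy t' U' h') * ((if b' = b then (1/2) * pauli 3 a' a else 0) - (if a' = a then (1/2) * pauli 3 b' b else 0))"

lemma RHS_form: assumes s: "\<sigma> \<in> SC d L" and s': "\<sigma>' \<in> SC d L"
  shows "- of_real (Jxy t U h) * Bspin d L x y \<sigma>' \<sigma> + of_real (bxy t U h) * (Sop x 3 \<sigma>' \<sigma> - Sop y 3 \<sigma>' \<sigma>)
    = (if (\<forall>z. z \<notin> {x, y} \<longrightarrow> \<sigma>' z = \<sigma> z) then RHS0 t U h (\<sigma>' x) (\<sigma>' y) (\<sigma> x) (\<sigma> y) else 0)"
proof -
  define A where "A = (\<forall>z. z \<notin> {x, y} \<longrightarrow> \<sigma>' z = \<sigma> z)"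
  have mideq: "mid \<sigma>' \<sigma> = (if A \<and> \<sigma>' x = \<sigma> x \<and> \<sigma>' y = \<sigma> y then 1 else 0)"
  proof -
    have "(\<sigma>' = \<sigma>) = (A \<and> \<sigma>' x = \<sigma> x \<and> \<sigma>' y = \<sigma> y)"
    proof
      assume h: "A \<and> \<sigma>' x = \<sigma> x \<and> \<sigma>' y = \<sigma> y"
      show "\<sigma>' = \<sigma>"
      proof
        fix z show "\<sigma>' z = \<sigma> z" using h unfolding A_def by (cases "z = x"; cases "z = y") auto
      qed
    qed (simp add: A_def)
    then show ?thesis unfolding mid_def by simp
  qed
  have SSeq: "mmul (SC d L) (Sop x a) (Sop y a) \<sigma>' \<sigma> =
    (if A then (1/4) * (pauli a (\<sigma>' x) (\<sigma> x) * pauli a (\<sigma>' y) (\<sigma> y)) else 0)" for a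
    unfolding A_def by (rule SS_eq[OF x xy s s'])
  have Sx: "Sop x 3 \<sigma>' \<sigma> = (if A \<and> \<sigma>' y = \<sigma> y then (1/2) * pauli 3 (\<sigma>' x) (\<sigma> x) else 0)"
  proof -
    have "(\<forall>w. w \<noteq> x \<longrightarrow> \<sigma>' w = \<sigma> w) = (A \<and> \<sigma>' y = \<sigma> y)"
      unfolding A_def using xy by auto
    then show ?thesis unfolding Sop_eq by simp
  qed
  have Sy: "Sop y 3 \<sigma>' \<sigma> = (if A \<and> \<sigma>' x = \<sigma> x then (1/2) * pauli 3 (\<sigma>' y) (\<sigma> y) else 0)"
  proof -
    have "(\<forall>w. w \<noteq> y \<longrightarrow> \<sigma>' w = \<sigma> w) = (A \<and> \<sigma>' x = \<sigma> x)"
      unfolding A_def using xy by auto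
    then show ?thesis unfolding Sop_eq by simp
  qed
  show ?thesis
    unfolding A_def[symmetric] Bspin_def mideq SSeq Sx Sy RHS0_def
    by (cases A) simp_all
qed

end

theorem lemmaB2:
  fixes d L :: nat and t h h0 U :: real and x y :: site and xs :: "site list"
  assumes "even L" and "L > 0"
    and "h0 > 0" and "\<bar>h\<bar> \<le> h0" and "U > h0"
    and "nn_bond d L x y" and "eta x = 1" and "eta y = -1"
    and "distinct xs" and "set xs = Lam d L"
  shows "spin_supported d L {x, y} (Uconj d L xs (Xop d L t U h x y))
    \<and> (\<forall>\<sigma>'\<in>SC d L. \<forall>\<sigma>\<in>SC d L.
         Uconj d L xs (Xop d L t U h x y) \<sigma>' \<sigma> =
           - of_real (Jxy t U h) * Bspin d L x y \<sigma>' \<sigma>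
           + of_real (bxy t U h) * (Sop x 3 \<sigma>' \<sigma> - Sop y 3 \<sigma>' \<sigma>))
    \<and> Jxy t U 0 = 4 * t^2 / U \<and> bxy t U 0 = 0"
proof -
  have x: "x \<in> Lam d L" and y: "y \<in> Lam d L" and xy: "x \<noteq> y"
    using assms(6) unfolding nn_bond_def by auto
  have U: "U > 0" using assms(3,5) by linarith
  have hU: "\<bar>h\<bar> < U" using assms(4,5) by linarith
  note ctx = x y xy assms(7) assms(8) U hU assms(9) assms(10)
  have M: "\<forall>\<sigma>'\<in>SC d L. \<forall>\<sigma>\<in>SC d L.
         Uconj d L xs (Xop d L t U h x y) \<sigma>' \<sigma> =
           - of_real (Jxy t U h) * Bspin d L x y \<sigma>' \<sigma>
           + of_real (bxy t U h) * (Sop x 3 \<sigma>' \<sigma> - Sop y 3 \<sigma>' \<sigma>)"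
    using main_eq[OF ctx] by blast
  have S: "spin_supported d L {x, y} (Uconj d L xs (Xop d L t U h x y))"
    unfolding spin_supported_def
  proof (intro exI ballI)
    fix \<sigma>' \<sigma> assume s': "\<sigma>' \<in> SC d L" and s: "\<sigma> \<in> SC d L"
    have iff: "(\<forall>z\<in>Lam d L - {x, y}. \<sigma>' z = \<sigma> z) = (\<forall>z. z \<notin> {x, y} \<longrightarrow> \<sigma>' z = \<sigma> z)"
      using s s' unfolding SC_def by auto
    show "Uconj d L xs (Xop d L t U h x y) \<sigma>' \<sigma> =
       (if \<forall>z\<in>Lam d L - {x, y}. \<sigma>' z = \<sigma> z
        then (\<lambda>\<beta>' \<beta>. RHS0 t U h (\<beta>' x) (\<beta>' y) (\<beta> x) (\<beta> y)) (\<lambda>z. z \<in> {x, y} \<and> \<sigma>' z) (\<lambda>z. z \<in> {x, y} \<and> \<sigma> z)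
        else 0)"
    proof -
      have e1: "Uconj d L xs (Xop d L t U h x y) \<sigma>' \<sigma> =
           - of_real (Jxy t U h) * Bspin d L x y \<sigma>' \<sigma>
           + of_real (bxy t U h) * (Sop x 3 \<sigma>' \<sigma> - Sop y 3 \<sigma>' \<sigma>)" using M s s' by blast
      show ?thesis unfolding iff e1 RHS_form[OF ctx s s'] by auto
    qed
  qed
  have J: "Jxy t U 0 = 4 * t^2 / U" unfolding Jxy_def using U by (simp add: power2_eq_square)
  have b: "bxy t U 0 = 0" unfolding bxy_def by simp
  show ?thesis using S M J b by blast
qed

end
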